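(* Let $\psi$ be a phylogenetic network on a set of three taxa $\{A,B,C\}$, with one gene copy ($a$, $b$, $c$ respectively) sampled from each taxon. For every choice of branch lengths $\lambda$ and inheritance probabilities $\Gamma$, there is no gene tree topology $g$ on $\{a,b,c\}$ that is anomalous for $(\psi,\lambda,\Gamma)$; that is, there is no $g$ with $P_{\psi,\lambda,\Gamma}(G=g) > P_{\psi,\lambda,\Gamma}(G=t)$ for all $t\in\mathcal{W}(\psi)$. In other words, $\psi$ does not produce anomalies.
   Context: A phylogenetic network $\psi$ is a rooted directed acyclic graph with a unique root (in-degree 0, out-degree 2), in which every other node is either an internal tree node (in-degree 1, out-degree 2), a leaf (in-degree 1, out-degree 0, labeled by a taxon), or a reticulation node (in-degree 2, out-degree 1). It has branch lengths $\lambda$ (in coalescent units), and for each reticulation node $v$ with incoming edges $b_1,b_2$ it has inheritance probabilities $\gamma_{b_1},\gamma_{b_2}\ge 0$ with $\gamma_{b_1}+\gamma_{b_2}=1$; $\Gamma$ denotes all of these. Multispecies network coalescent: gene lineages are traced backward in time from the leaves; within each branch, every pair of lineages present coalesces independently at rate 1 per coalescent unit (Kingman coalescent), for the duration given by the branch length; when a lineage reaches a reticulation node $v$, it independently enters incoming edge $b$ with probability $\gamma_b$; above the root all remaining lineages coalesce (root branch of infinite length). $P_{\psi,\lambda,\Gamma}(G=g)$ denotes the resulting probability that the gene tree topology is $g$ (with gene copies identified with their taxa). MUL-tree of $\psi$: processing nodes from the leaves toward the root, for each reticulation node $h$ with parents $u,v$ and child $w$, make two copies of the subtree rooted at $w$,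 attach one as a child of $u$ and the other as a child of $v$, and delete $h$ and its incident edges. The result is a tree whose leaves may share taxon labels. Parental trees: $\mathcal{W}(\psi)$ is the set of tree topologies on $\{A,B,C\}$ obtained from the MUL-tree by retaining exactly one leaf labeled by each taxon, deleting the others, and repeatedly suppressing nodes of in-degree 1 and out-degree 1. A gene tree topology $g$ is anomalous for $(\psi,\lambda,\Gamma)$ if $P_{\psi,\lambda,\Gamma}(G=g)>P_{\psi,\lambda,\Gamma}(G=t)$ for all $t\in\mathcal{W}(\psi)$; $\psi$ produces anomalies if some $\lambda,\Gamma$ admit an anomalous gene tree. *)

theory Defs
  imports "HOL-Analysis.Analysis" "HOL-Library.FuncSet" "HOL-Library.Sublist"
begin

text \<open>The three taxa A, B, C.  Gene copies a, b, c are identified with their taxa.\<close>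
datatype taxon = A | B | C

lemma UNIV_taxon: "(UNIV :: taxon set) = {A, B, C}"
  using taxon.exhaust by auto

instance taxon :: finite
  by standard (simp add: UNIV_taxon)

text \<open>A rooted binary tree topology on {A,B,C} is determined by its unique non-trivial
  cluster (its cherry), a 2-element subset of the taxa.  We represent a topology by
  this cluster.\<close>
definition topologies3 :: "taxon set set" where
  "topologies3 = {T. card T = 2}"

text \<open>A network is given by a node set V, an edge set Es (edges are abstract so that parallel
  edges are allowed), source/target maps, a root \<rho> and a leaf labelling lab.\<close>

definition indeg :: "'e set \<Rightarrow> ('e \<Rightarrow> 'v) \<Rightarrow> 'v \<Rightarrow> nat" where
  "indeg Es tgt v = card {e \<in> Es. tgt e = v}"

definition outdeg :: "'e set \<Rightarrow> ('e \<Rightarrow> 'v) \<Rightarrow> 'v \<Rightarrow> nat" where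
  "outdeg Es src v = card {e \<in> Es. src e = v}"

definition leaves :: "'v set \<Rightarrow> 'e set \<Rightarrow> ('e \<Rightarrow> 'v) \<Rightarrow> 'v \<Rightarrow> 'v set" where
  "leaves V Es src \<rho> = {v \<in> V. v \<noteq> \<rho> \<and> outdeg Es src v = 0}"

definition reticulations :: "'v set \<Rightarrow> 'e set \<Rightarrow> ('e \<Rightarrow> 'v) \<Rightarrow> 'v set" where
  "reticulations V Es tgt = {v \<in> V. indeg Es tgt v = 2}"

definition phylo_net3 ::
  "'v set \<Rightarrow> 'e set \<Rightarrow> ('e \<Rightarrow> 'v) \<Rightarrow> ('e \<Rightarrow> 'v) \<Rightarrow> 'v \<Rightarrow> ('v \<Rightarrow> taxon) \<Rightarrow> bool" where
  "phylo_net3 V Es src tgt \<rho> lab \<longleftrightarrow>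
     finite V \<and> finite Es \<and>
     (\<forall>e\<in>Es. src e \<in> V \<and> tgt e \<in> V) \<and>
     \<rho> \<in> V \<and> indeg Es tgt \<rho> = 0 \<and> outdeg Es src \<rho> = 2 \<and>
     (\<forall>v\<in>V - {\<rho>}.
        (indeg Es tgt v = 1 \<and> outdeg Es src v = 2) \<or>
        (indeg Es tgt v = 1 \<and> outdeg Es src v = 0) \<or>
        (indeg Es tgt v = 2 \<and> outdeg Es src v = 1)) \<and>
     acyclic {(src e, tgt e) | e. e \<in> Es} \<and>
     bij_betw lab (leaves V Es src \<rho>) (UNIV :: taxon set)"

definition valid_params ::
  "'v set \<Rightarrow> 'e set \<Rightarrow> ('e \<Rightarrow> 'v) \<Rightarrow> ('e \<Rightarrow> real) \<Rightarrow> ('e \<Rightarrow> real) \<Rightarrow> bool" where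
  "valid_params V Es tgt len \<gamma> \<longleftrightarrow>
     (\<forall>e\<in>Es. len e > 0) \<and>
     (\<forall>v\<in>reticulations V Es tgt.
        (\<forall>e\<in>Es. tgt e = v \<longrightarrow> \<gamma> e \<ge> 0) \<and> (\<Sum>e\<in>{e\<in>Es. tgt e = v}. \<gamma> e) = 1)"

text \<open>Lineages are identified with the (pairwise disjoint, nonempty) sets of taxa they carry.
  pd n k t: probability that exactly k coalescences happen in time t starting from n
  lineages, where every pair coalesces at rate 1 (total rate n choose 2); defined by
  first-step analysis of the pure-death process.\<close>
fun pd :: "nat \<Rightarrow> nat \<Rightarrow> real \<Rightarrow> real" where
  "pd n 0 t = exp (- real (n choose 2) * t)"
| "pd n (Suc k) t =
     integral {0..t} (\<lambda>s. real (n choose 2) * exp (- real (n choose 2) * s) * pd (n - 1) k (t - s))"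

definition mpairs :: "taxon set set \<Rightarrow> taxon set set set" where
  "mpairs P = {pr. pr \<subseteq> P \<and> card pr = 2}"

text \<open>mchain k P Q H: probability that k successive coalescences, each merging a uniformly
  chosen pair of the current lineages, lead from lineage set P to lineage set Q while
  creating exactly the set H of new clusters (gene tree clades).\<close>
fun mchain :: "nat \<Rightarrow> taxon set set \<Rightarrow> taxon set set \<Rightarrow> taxon set set \<Rightarrow> real" where
  "mchain 0 P Q H = (if Q = P \<and> H = {} then 1 else 0)"
| "mchain (Suc k) P Q H =
     (\<Sum>pr\<in>mpairs P.
        (if \<Union>pr \<in> H then mchain k ((P - pr) \<union> {\<Union>pr}) Q (H - {\<Union>pr}) / real (card (mpairs P))
         else 0))"

definition coalw :: "real \<Rightarrow> taxon set set \<Rightarrow> taxon set set \<Rightarrow> taxon set set \<Rightarrow> real" where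
  "coalw t P Q H = (\<Sum>k\<le>card P. pd (card P) k t * mchain k P Q H)"

text \<open>Root branch of infinite length: all lineages coalesce.\<close>
definition rootw :: "taxon set set \<Rightarrow> taxon set set \<Rightarrow> taxon set set \<Rightarrow> real" where
  "rootw P Q H = mchain (card P - 1) P Q H"

text \<open>A history assigns to each edge e a triple (lineages entering e at its bottom,
  lineages leaving e at its top, clusters created inside e).  The probability of a history
  is the product of the branch transition probabilities, the reticulation routing
  probabilities (each lineage independently chooses an incoming edge b with prob. gamma b),
  and the root-branch probability; it is zero unless the history is consistent.\<close>

definition bottom_lineages ::
  "'e set \<Rightarrow> ('e \<Rightarrow> 'v) \<Rightarrow> ('v \<Rightarrow> taxon) \<Rightarrow> ('e \<Rightarrow> taxon set set \<times> taxon set set \<times> taxon set set)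
    \<Rightarrow> 'v \<Rightarrow> taxon set set" where
  "bottom_lineages Es src lab h v =
     (if outdeg Es src v = 0 then {{lab v}}
      else \<Union>{fst (snd (h e)) | e. e \<in> Es \<and> src e = v})"

definition consistent_history ::
  "'v set \<Rightarrow> 'e set \<Rightarrow> ('e \<Rightarrow> 'v) \<Rightarrow> ('e \<Rightarrow> 'v) \<Rightarrow> 'v \<Rightarrow> ('v \<Rightarrow> taxon)
    \<Rightarrow> ('e \<Rightarrow> taxon set set \<times> taxon set set \<times> taxon set set) \<Rightarrow> bool" where
  "consistent_history V Es src tgt \<rho> lab h \<longleftrightarrow>
     (\<forall>v\<in>V - {\<rho>}.
        bottom_lineages Es src lab h v = \<Union>{fst (h e) | e. e \<in> Es \<and> tgt e = v} \<and>
        (\<forall>e1\<in>Es. \<forall>e2\<in>Es. tgt e1 = v \<and> tgt e2 = v \<and> e1 \<noteq> e2 \<longrightarrow> fst (h e1) \<inter> fst (h e2) = {}))"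

definition history_weight ::
  "'v set \<Rightarrow> 'e set \<Rightarrow> ('e \<Rightarrow> 'v) \<Rightarrow> ('e \<Rightarrow> 'v) \<Rightarrow> 'v \<Rightarrow> ('e \<Rightarrow> real) \<Rightarrow> ('e \<Rightarrow> real)
    \<Rightarrow> ('e \<Rightarrow> taxon set set \<times> taxon set set \<times> taxon set set) \<Rightarrow> taxon set set \<Rightarrow> taxon set set \<Rightarrow> real" where
  "history_weight V Es src tgt \<rho> len \<gamma> h Qr Hr =
     (\<Prod>e\<in>Es. coalw (len e) (fst (h e)) (fst (snd (h e))) (snd (snd (h e)))) *
     (\<Prod>v\<in>reticulations V Es tgt. \<Prod>e\<in>{e\<in>Es. tgt e = v}. \<gamma> e ^ card (fst (h e))) *
     rootw (\<Union>{fst (snd (h e)) | e. e \<in> Es \<and> src e = \<rho>}) Qr Hr"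

text \<open>P(G = g), g given by its cherry: the probability that the cluster g is created.\<close>
definition gene_tree_prob ::
  "'v set \<Rightarrow> 'e set \<Rightarrow> ('e \<Rightarrow> 'v) \<Rightarrow> ('e \<Rightarrow> 'v) \<Rightarrow> 'v \<Rightarrow> ('v \<Rightarrow> taxon) \<Rightarrow> ('e \<Rightarrow> real) \<Rightarrow> ('e \<Rightarrow> real)
    \<Rightarrow> taxon set \<Rightarrow> real" where
  "gene_tree_prob V Es src tgt \<rho> lab len \<gamma> g =
     (\<Sum>h\<in>Es \<rightarrow>\<^sub>E UNIV. \<Sum>(Qr, Hr)\<in>UNIV.
        if consistent_history V Es src tgt \<rho> lab h \<and> g \<in> Hr \<union> \<Union>((\<lambda>e. snd (snd (h e))) ` Es)
        then history_weight V Es src tgt \<rho> len \<gamma> h Qr Hr else 0)"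

text \<open>The MUL-tree is the unfolding of the network: its nodes are the directed paths
  (edge lists) from the root, a path q' being a descendant of q iff q is a prefix of q';
  its leaves are paths ending in a network leaf, labelled by that leaf's taxon.\<close>
fun is_path :: "'e set \<Rightarrow> ('e \<Rightarrow> 'v) \<Rightarrow> ('e \<Rightarrow> 'v) \<Rightarrow> 'e list \<Rightarrow> 'v \<Rightarrow> 'v \<Rightarrow> bool" where
  "is_path Es src tgt [] u w = (u = w)"
| "is_path Es src tgt (e # es) u w = (e \<in> Es \<and> src e = u \<and> is_path Es src tgt es (tgt e) w)"

definition mul_tree_nodes :: "'v set \<Rightarrow> 'e set \<Rightarrow> ('e \<Rightarrow> 'v) \<Rightarrow> ('e \<Rightarrow> 'v) \<Rightarrow> 'v \<Rightarrow> 'e list set" where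
  "mul_tree_nodes V Es src tgt \<rho> = {q. \<exists>w\<in>V. is_path Es src tgt q \<rho> w}"

definition mul_tree_leaf_copy ::
  "'v set \<Rightarrow> 'e set \<Rightarrow> ('e \<Rightarrow> 'v) \<Rightarrow> ('e \<Rightarrow> 'v) \<Rightarrow> 'v \<Rightarrow> ('v \<Rightarrow> taxon) \<Rightarrow> taxon \<Rightarrow> 'e list \<Rightarrow> bool" where
  "mul_tree_leaf_copy V Es src tgt \<rho> lab X q \<longleftrightarrow>
     (\<exists>v\<in>leaves V Es src \<rho>. lab v = X \<and> is_path Es src tgt q \<rho> v)"

text \<open>Parental trees: retain one leaf copy p X for each taxon X; the resulting topology
  (after suppressing unary nodes) has as clusters the sets {X. q is an ancestor of p X}
  for MUL-tree nodes q; we record its 2-element cluster.\<close>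
definition parental_trees ::
  "'v set \<Rightarrow> 'e set \<Rightarrow> ('e \<Rightarrow> 'v) \<Rightarrow> ('e \<Rightarrow> 'v) \<Rightarrow> 'v \<Rightarrow> ('v \<Rightarrow> taxon) \<Rightarrow> taxon set set" where
  "parental_trees V Es src tgt \<rho> lab =
     {T. card T = 2 \<and>
        (\<exists>p. (\<forall>X. mul_tree_leaf_copy V Es src tgt \<rho> lab X (p X)) \<and>
             (\<exists>q\<in>mul_tree_nodes V Es src tgt \<rho>. T = {X. prefix q (p X)}))}"

definition anomalous ::
  "'v set \<Rightarrow> 'e set \<Rightarrow> ('e \<Rightarrow> 'v) \<Rightarrow> ('e \<Rightarrow> 'v) \<Rightarrow> 'v \<Rightarrow> ('v \<Rightarrow> taxon) \<Rightarrow> ('e \<Rightarrow> real) \<Rightarrow> ('e \<Rightarrow> real)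
    \<Rightarrow> taxon set \<Rightarrow> bool" where
  "anomalous V Es src tgt \<rho> lab len \<gamma> g \<longleftrightarrow>
     (\<forall>t\<in>parental_trees V Es src tgt \<rho> lab.
        gene_tree_prob V Es src tgt \<rho> lab len \<gamma> g > gene_tree_prob V Es src tgt \<rho> lab len \<gamma> t)"

definition produces_anomalies ::
  "'v set \<Rightarrow> 'e set \<Rightarrow> ('e \<Rightarrow> 'v) \<Rightarrow> ('e \<Rightarrow> 'v) \<Rightarrow> 'v \<Rightarrow> ('v \<Rightarrow> taxon) \<Rightarrow> bool" where
  "produces_anomalies V Es src tgt \<rho> lab \<longleftrightarrow>
     (\<exists>len \<gamma>. valid_params V Es tgt len \<gamma> \<and>
        (\<exists>g\<in>topologies3. anomalous V Es src tgt \<rho> lab len \<gamma> g))"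

end

theory Submission
  imports Defs
begin

definition part :: "taxon set set \<Rightarrow> bool" where
  "part P \<longleftrightarrow> (\<forall>b\<in>P. b \<noteq> {}) \<and> (\<forall>b1\<in>P. \<forall>b2\<in>P. b1 \<noteq> b2 \<longrightarrow> b1 \<inter> b2 = {})"

definition UU :: "taxon set set \<Rightarrow> taxon set set" where
  "UU P = {\<Union>A' | A'. A' \<subseteq> P}"

lemma mchain_nz_0: "mchain 0 P Q H \<noteq> 0 \<Longrightarrow> Q = P \<and> H = {}"
  by (simp split: if_splits)

lemma mchain_nz_Suc:
  assumes "mchain (Suc k) P Q H \<noteq> 0"
  shows "\<exists>pr\<in>mpairs P. \<Union>pr \<in> H \<and> mchain k ((P - pr) \<union> {\<Union>pr}) Q (H - {\<Union>pr}) \<noteq> 0"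
proof -
  from assms obtain pr where "pr \<in> mpairs P"
    "(if \<Union>pr \<in> H then mchain k ((P - pr) \<union> {\<Union>pr}) Q (H - {\<Union>pr}) / real (card (mpairs P)) else 0) \<noteq> 0"
    by (auto elim: sum.not_neutral_contains_not_neutral)
  then show ?thesis by (auto split: if_splits)
qed

lemma mchain_props:
  "mchain k P Q H \<noteq> 0 \<Longrightarrow> \<Union>Q = \<Union>P \<and> (\<forall>b\<in>P. \<exists>B\<in>Q. b \<subseteq> B) \<and> (\<forall>S\<in>H. \<exists>B\<in>Q. S \<subseteq> B)
    \<and> (part P \<longrightarrow> part Q \<and> (\<forall>S\<in>H. \<exists>s1 s2. s1 \<in> UU P \<and> s2 \<in> UU P \<and> s1 \<inter> s2 = {} \<and> s1 \<noteq> {} \<and> s2 \<noteq> {} \<and> S = s1 \<union> s2))"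
proof (induction k arbitrary: P H)
  case 0
  then have "Q = P \<and> H = {}" by (rule mchain_nz_0)
  then show ?case by auto
next
  case (Suc k)
  from mchain_nz_Suc[OF Suc.prems] obtain pr where pr: "pr \<in> mpairs P" "\<Union>pr \<in> H"
    and nz: "mchain k ((P - pr) \<union> {\<Union>pr}) Q (H - {\<Union>pr}) \<noteq> 0" by blast
  from pr(1) have "card pr = 2" "pr \<subseteq> P" by (simp_all add: mpairs_def)
  then obtain b1 b2 where b: "pr = {b1, b2}" "b1 \<noteq> b2" "b1 \<in> P" "b2 \<in> P"
    by (metis card_2_iff insert_subset)
  define P1 where "P1 = (P - pr) \<union> {\<Union>pr}"
  note IHs = Suc.IH[OF nz, folded P1_def]
  have IH1: "\<Union>Q = \<Union>P1" using IHs by (rule conjunct1)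
  have IH2: "\<forall>b\<in>P1. \<exists>B\<in>Q. b \<subseteq> B" using IHs[THEN conjunct2] by (rule conjunct1)
  have IH3: "\<forall>S\<in>H - {\<Union>pr}. \<exists>B\<in>Q. S \<subseteq> B" using IHs[THEN conjunct2, THEN conjunct2] by (rule conjunct1)
  have IH4: "part P1 \<Longrightarrow> part Q" using IHs[THEN conjunct2, THEN conjunct2, THEN conjunct2] by blast
  have IH5: "part P1 \<Longrightarrow> S \<in> H - {\<Union>pr} \<Longrightarrow> \<exists>s1 s2. s1 \<in> UU P1 \<and> s2 \<in> UU P1 \<and> s1 \<inter> s2 = {} \<and> s1 \<noteq> {} \<and> s2 \<noteq> {} \<and> S = s1 \<union> s2" for S
    using IHs[THEN conjunct2, THEN conjunct2, THEN conjunct2] by blast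
  have U1: "\<Union>P1 = \<Union>P" unfolding P1_def using b by auto
  have c2: "\<forall>b\<in>P. \<exists>B\<in>Q. b \<subseteq> B"
  proof
    fix b assume "b \<in> P"
    show "\<exists>B\<in>Q. b \<subseteq> B"
    proof (cases "b \<in> pr")
      case True
      then have "b \<subseteq> \<Union>pr" by (rule Union_upper)
      moreover have "\<Union>pr \<in> P1" unfolding P1_def by simp
      ultimately show ?thesis using IH2 by (meson subset_trans)
    next
      case False
      then have "b \<in> P1" unfolding P1_def using \<open>b \<in> P\<close> by simp
      then show ?thesis using IH2 by blast
    qed
  qed
  have c3: "\<forall>S\<in>H. \<exists>B\<in>Q. S \<subseteq> B"
  proof
    fix S assume "S \<in> H"
    show "\<exists>B\<in>Q. S \<subseteq> B"
    proof (cases "S = \<Union>pr")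
      case True
      have "\<Union>pr \<in> P1" unfolding P1_def by simp
      then show ?thesis using IH2 True by simp
    next
      case False
      then show ?thesis using IH3 \<open>S \<in> H\<close> by blast
    qed
  qed
  have UUsub: "UU P1 \<subseteq> UU P"
  proof
    fix s assume "s \<in> UU P1"
    then obtain A' where A': "A' \<subseteq> P1" "s = \<Union>A'" unfolding UU_def by auto
    define A'' where "A'' = (A' \<inter> P) \<union> (if \<Union>pr \<in> A' then pr else {})"
    have "A'' \<subseteq> P" unfolding A''_def using b by auto
    moreover have "\<Union>A'' = \<Union>A'"
    proof
      show "\<Union>A'' \<subseteq> \<Union>A'" unfolding A''_def by auto
      show "\<Union>A' \<subseteq> \<Union>A''"
      proof
        fix x assume "x \<in> \<Union>A'"
        then obtain a where "a \<in> A'" "x \<in> a" by auto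
        show "x \<in> \<Union>A''"
        proof (cases "a \<in> P")
          case True then show ?thesis using \<open>a \<in> A'\<close> \<open>x \<in> a\<close> unfolding A''_def by blast
        next
          case False
          then have "a = \<Union>pr" using A'(1) \<open>a \<in> A'\<close> unfolding P1_def by auto
          then show ?thesis using \<open>a \<in> A'\<close> \<open>x \<in> a\<close> unfolding A''_def by auto
        qed
      qed
    qed
    ultimately show "s \<in> UU P" unfolding UU_def using A'(2) by (metis (mono_tags, lifting) mem_Collect_eq)
  qed
  have c4: "part P \<longrightarrow> part Q \<and> (\<forall>S\<in>H. \<exists>s1 s2. s1 \<in> UU P \<and> s2 \<in> UU P \<and> s1 \<inter> s2 = {} \<and> s1 \<noteq> {} \<and> s2 \<noteq> {} \<and> S = s1 \<union> s2)"
  proof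
    assume pP: "part P"
    have pP1: "part P1"
      unfolding part_def
    proof (intro conjI ballI impI)
      fix bb assume "bb \<in> P1" then show "bb \<noteq> {}" using pP b unfolding P1_def part_def by auto
    next
      fix c1 c2 assume "c1 \<in> P1" "c2 \<in> P1" "c1 \<noteq> c2"
      then show "c1 \<inter> c2 = {}"
      proof (cases "c1 = \<Union>pr")
        case True
        then have "c2 \<in> P - pr" using \<open>c2 \<in> P1\<close> \<open>c1 \<noteq> c2\<close> unfolding P1_def by auto
        then have "c2 \<inter> b1 = {}" "c2 \<inter> b2 = {}" using pP b unfolding part_def by auto
        then show ?thesis using True b by auto
      next
        case False
        note F = False
        show ?thesis
        proof (cases "c2 = \<Union>pr")
          case True
          then have "c1 \<in> P - pr" using \<open>c1 \<in> P1\<close> F unfolding P1_def by auto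
          then have "c1 \<inter> b1 = {}" "c1 \<inter> b2 = {}" using pP b unfolding part_def by auto
          then show ?thesis using True b by auto
        next
          case False
          then have "c1 \<in> P" "c2 \<in> P" using \<open>c1 \<in> P1\<close> \<open>c2 \<in> P1\<close> F unfolding P1_def by auto
          then show ?thesis using pP \<open>c1 \<noteq> c2\<close> unfolding part_def by auto
        qed
      qed
    qed
    have "\<forall>S\<in>H. \<exists>s1 s2. s1 \<in> UU P \<and> s2 \<in> UU P \<and> s1 \<inter> s2 = {} \<and> s1 \<noteq> {} \<and> s2 \<noteq> {} \<and> S = s1 \<union> s2"
    proof
      fix S assume "S \<in> H"
      show "\<exists>s1 s2. s1 \<in> UU P \<and> s2 \<in> UU P \<and> s1 \<inter> s2 = {} \<and> s1 \<noteq> {} \<and> s2 \<noteq> {} \<and> S = s1 \<union> s2"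
      proof (cases "S = \<Union>pr")
        case True
        have "b1 = \<Union>{b1}" "{b1} \<subseteq> P" "b2 = \<Union>{b2}" "{b2} \<subseteq> P" using b by auto
        then have "b1 \<in> UU P" "b2 \<in> UU P" unfolding UU_def by blast+
        moreover have "b1 \<inter> b2 = {}" "b1 \<noteq> {}" "b2 \<noteq> {}" using pP b unfolding part_def by auto
        ultimately show ?thesis using True b by auto
      next
        case False
        then have "S \<in> H - {\<Union>pr}" using \<open>S \<in> H\<close> by blast
        from IH5[OF pP1 this] obtain s1 s2 where "s1 \<in> UU P1" "s2 \<in> UU P1" "s1 \<inter> s2 = {}" "s1 \<noteq> {}" "s2 \<noteq> {}" "S = s1 \<union> s2" by blast
        then show ?thesis using UUsub by blast
      qed
    qed
    then show "part Q \<and> (\<forall>S\<in>H. \<exists>s1 s2. s1 \<in> UU P \<and> s2 \<in> UU P \<and> s1 \<inter> s2 = {} \<and> s1 \<noteq> {} \<and> s2 \<noteq> {} \<and> S = s1 \<union> s2)"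
      using IH4[OF pP1] by blast
  qed
  have "\<Union>Q = \<Union>P" using IH1 U1 by simp
  then show ?case using c2 c3 c4 by (intro conjI) assumption+
qed


definition pm :: "(taxon \<Rightarrow> taxon) \<Rightarrow> taxon set set \<Rightarrow> taxon set set" where
  "pm \<sigma> P = (\<lambda>U2. \<sigma> ` U2) ` P"

lemma inj_img: "bij \<sigma> \<Longrightarrow> inj (\<lambda>U2::taxon set. \<sigma> ` U2)"
  by (meson bij_def injI inj_image_eq_iff)

lemma inj_pm: "bij \<sigma> \<Longrightarrow> inj (pm \<sigma>)"
  unfolding pm_def by (meson inj_img injI inj_image_eq_iff)

lemma pm_eq_iff: "bij \<sigma> \<Longrightarrow> pm \<sigma> U1 = pm \<sigma> U2 \<longleftrightarrow> U1 = U2"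
  using inj_pm by (metis injD)

lemma card_pm: "bij \<sigma> \<Longrightarrow> card (pm \<sigma> U1) = card U1"
  unfolding pm_def by (meson card_image inj_img inj_on_subset subset_UNIV)

lemma mem_pm_iff: "bij \<sigma> \<Longrightarrow> \<sigma> ` S \<in> pm \<sigma> U1 \<longleftrightarrow> S \<in> U1"
  unfolding pm_def using inj_img by (metis inj_image_mem_iff)

lemma pm_union: "\<Union>(pm \<sigma> pr) = \<sigma> ` \<Union>pr"
  unfolding pm_def by auto

lemma pm_diff: "bij \<sigma> \<Longrightarrow> pm \<sigma> (U1 - U2) = pm \<sigma> U1 - pm \<sigma> U2"
  unfolding pm_def by (metis image_set_diff inj_img)

lemma pm_Un: "pm \<sigma> (U1 \<union> U2) = pm \<sigma> U1 \<union> pm \<sigma> U2"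
  unfolding pm_def by auto

lemma pm_single: "pm \<sigma> {S} = {\<sigma> ` S}"
  unfolding pm_def by auto

lemma pm_insert: "pm \<sigma> (insert S U1) = insert (\<sigma> ` S) (pm \<sigma> U1)"
  unfolding pm_def by auto

lemma pm_empty_iff: "pm \<sigma> U1 = {} \<longleftrightarrow> U1 = {}"
  unfolding pm_def by auto

lemma pm_mono: "U1 \<subseteq> U2 \<Longrightarrow> pm \<sigma> U1 \<subseteq> pm \<sigma> U2"
  unfolding pm_def by auto

lemma mpairs_pm: "bij \<sigma> \<Longrightarrow> mpairs (pm \<sigma> P) = pm \<sigma> ` mpairs P"
proof
  assume b: "bij \<sigma>"
  show "mpairs (pm \<sigma> P) \<subseteq> pm \<sigma> ` mpairs P"
  proof
    fix pr' assume "pr' \<in> mpairs (pm \<sigma> P)"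
    then have "pr' \<subseteq> (\<lambda>U2. \<sigma> ` U2) ` P" "card pr' = 2" unfolding mpairs_def pm_def by auto
    then obtain AA where AA: "AA \<subseteq> P" "pr' = (\<lambda>U2. \<sigma> ` U2) ` AA" by (auto simp: subset_image_iff)
    then have "card AA = 2" using \<open>card pr' = 2\<close> card_pm[OF b, of AA] unfolding pm_def by simp
    then show "pr' \<in> pm \<sigma> ` mpairs P" using AA unfolding mpairs_def pm_def by auto
  qed
  show "pm \<sigma> ` mpairs P \<subseteq> mpairs (pm \<sigma> P)"
    unfolding mpairs_def using card_pm[OF b] pm_mono[of _ P \<sigma>] by auto
qed

lemma mchain_perm:
  assumes b: "bij \<sigma>"
  shows "mchain k (pm \<sigma> P) (pm \<sigma> Q) (pm \<sigma> H) = mchain k P Q H"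
proof (induction k arbitrary: P H)
  case 0
  show ?case using pm_eq_iff[OF b] pm_empty_iff by simp
next
  case (Suc k)
  have inj: "inj_on (pm \<sigma>) (mpairs P)" using inj_pm[OF b] by (meson inj_on_subset subset_UNIV)
  have cd: "card (mpairs (pm \<sigma> P)) = card (mpairs P)"
    using mpairs_pm[OF b] card_image[OF inj] by simp
  have "mchain (Suc k) (pm \<sigma> P) (pm \<sigma> Q) (pm \<sigma> H) =
     (\<Sum>pr\<in>mpairs (pm \<sigma> P).
        (if \<Union>pr \<in> pm \<sigma> H then mchain k ((pm \<sigma> P - pr) \<union> {\<Union>pr}) (pm \<sigma> Q) (pm \<sigma> H - {\<Union>pr}) / real (card (mpairs (pm \<sigma> P)))
         else 0))" by simp
  also have "\<dots> = (\<Sum>pr\<in>mpairs P.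
        (if \<Union>(pm \<sigma> pr) \<in> pm \<sigma> H then mchain k ((pm \<sigma> P - pm \<sigma> pr) \<union> {\<Union>(pm \<sigma> pr)}) (pm \<sigma> Q) (pm \<sigma> H - {\<Union>(pm \<sigma> pr)}) / real (card (mpairs (pm \<sigma> P)))
         else 0))"
    unfolding mpairs_pm[OF b] by (subst sum.reindex[OF inj]) simp
  also have "\<dots> = (\<Sum>pr\<in>mpairs P.
        (if \<Union>pr \<in> H then mchain k ((P - pr) \<union> {\<Union>pr}) Q (H - {\<Union>pr}) / real (card (mpairs P))
         else 0))"
  proof (rule sum.cong[OF refl])
    fix pr assume "pr \<in> mpairs P"
    have e1: "(pm \<sigma> P - pm \<sigma> pr) \<union> {\<sigma> ` \<Union>pr} = pm \<sigma> ((P - pr) \<union> {\<Union>pr})"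
      by (simp add: pm_diff[OF b] pm_Un pm_single pm_union pm_insert)
    have e2: "pm \<sigma> H - {\<sigma> ` \<Union>pr} = pm \<sigma> (H - {\<Union>pr})"
      by (simp add: pm_diff[OF b] pm_single pm_union)
    show "(if \<Union>(pm \<sigma> pr) \<in> pm \<sigma> H then mchain k ((pm \<sigma> P - pm \<sigma> pr) \<union> {\<Union>(pm \<sigma> pr)}) (pm \<sigma> Q) (pm \<sigma> H - {\<Union>(pm \<sigma> pr)}) / real (card (mpairs (pm \<sigma> P)))
         else 0) = (if \<Union>pr \<in> H then mchain k ((P - pr) \<union> {\<Union>pr}) Q (H - {\<Union>pr}) / real (card (mpairs P))
         else 0)"
      by (simp only: pm_union mem_pm_iff[OF b] e1 e2 Suc.IH cd)
  qed
  also have "\<dots> = mchain (Suc k) P Q H" by simp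
  finally show ?case .
qed

lemma coalw_perm: "bij \<sigma> \<Longrightarrow> coalw t (pm \<sigma> P) (pm \<sigma> Q) (pm \<sigma> H) = coalw t P Q H"
  unfolding coalw_def by (simp add: card_pm mchain_perm)

lemma rootw_perm: "bij \<sigma> \<Longrightarrow> rootw (pm \<sigma> P) (pm \<sigma> Q) (pm \<sigma> H) = rootw P Q H"
  unfolding rootw_def by (simp add: card_pm mchain_perm)

lemma pd_nonneg: "pd n k t \<ge> 0"
proof (induction k arbitrary: n t)
  case 0 then show ?case by simp
next
  case (Suc k)
  show ?case
  proof (cases "(\<lambda>s. real (n choose 2) * exp (- real (n choose 2) * s) * pd (n - 1) k (t - s)) integrable_on {0..t}")
    case True
    then show ?thesis by (simp, intro integral_nonneg) (auto intro!: mult_nonneg_nonneg Suc.IH)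
  next
    case False
    then show ?thesis by (simp add: not_integrable_integral)
  qed
qed

lemma mchain_nonneg: "mchain k P Q H \<ge> 0"
  by (induction k arbitrary: P H) (auto intro!: sum_nonneg divide_nonneg_nonneg)

lemma coalw_nonneg: "coalw t P Q H \<ge> 0"
  unfolding coalw_def by (auto intro!: sum_nonneg mult_nonneg_nonneg pd_nonneg mchain_nonneg)

lemma rootw_nonneg: "rootw P Q H \<ge> 0"
  unfolding rootw_def by (rule mchain_nonneg)

lemma chain_common:
  assumes "(u, l) \<in> S\<^sup>*" "(w, l) \<in> S\<^sup>*"
    and uniq: "\<And>x y z. (x, z) \<in> S \<Longrightarrow> (y, z) \<in> S \<Longrightarrow> (u, z) \<in> S\<^sup>+ \<Longrightarrow> (w, z) \<in> S\<^sup>+ \<Longrightarrow> x = y"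
  shows "(u, w) \<in> S\<^sup>* \<or> (w, u) \<in> S\<^sup>*"
  using assms(1,2)
proof (induction l rule: rtrancl_induct)
  case base
  then show ?case by simp
next
  case (step y z)
  from \<open>(w, z) \<in> S\<^sup>*\<close> have "w = z \<or> (\<exists>y'. (w, y') \<in> S\<^sup>* \<and> (y', z) \<in> S)"
    by (meson rtranclE)
  then show ?case
  proof
    assume "w = z"
    then show ?case using step.hyps by auto
  next
    assume "\<exists>y'. (w, y') \<in> S\<^sup>* \<and> (y', z) \<in> S"
    then obtain y' where y': "(w, y') \<in> S\<^sup>*" "(y', z) \<in> S" by blast
    have uz: "(u, z) \<in> S\<^sup>+" using step.hyps(1,2) by (rule rtrancl_into_trancl1)
    have wz: "(w, z) \<in> S\<^sup>+" using y' by (rule rtrancl_into_trancl1)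
    have "y' = y" by (rule uniq[OF y'(2) step.hyps(2) uz wz])
    then show ?case using step.IH y'(1) by simp
  qed
qed

lemma is_path_append:
  "is_path Es src tgt (xs @ ys) u w \<longleftrightarrow> (\<exists>m. is_path Es src tgt xs u m \<and> is_path Es src tgt ys m w)"
  by (induction xs arbitrary: u) auto

lemma is_path_det: "is_path Es src tgt q u w \<Longrightarrow> is_path Es src tgt q u w' \<Longrightarrow> w = w'"
  by (induction q arbitrary: u) auto

lemma is_path_set: "is_path Es src tgt q u w \<Longrightarrow> set q \<subseteq> Es"
  by (induction q arbitrary: u) auto

lemma rel_path:
  assumes "(u, v) \<in> {(src e, tgt e) | e. e \<in> Es'}\<^sup>*" "Es' \<subseteq> Es"
  shows "\<exists>q. is_path Es src tgt q u v \<and> set q \<subseteq> Es'"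
  using assms(1)
proof (induction v rule: rtrancl_induct)
  case base
  then show ?case by (auto intro: exI[of _ "[]"])
next
  case (step y z)
  then obtain q where q: "is_path Es src tgt q u y" "set q \<subseteq> Es'" by blast
  from step obtain e where e: "e \<in> Es'" "src e = y" "tgt e = z" by auto
  have "is_path Es src tgt (q @ [e]) u z" using q e assms(2) by (auto simp: is_path_append)
  then show ?case using q e by (intro exI[of _ "q @ [e]"]) auto
qed

lemma prefix_take_iff: "prefix xs ys \<longleftrightarrow> take (length xs) ys = xs"
proof
  assume "prefix xs ys"
  then obtain zs where "ys = xs @ zs" by (auto simp: prefix_def)
  then show "take (length xs) ys = xs" by simp
next
  assume "take (length xs) ys = xs"
  then have "ys = xs @ drop (length xs) ys" by (metis append_take_drop_id)
  then show "prefix xs ys" by (auto simp: prefix_def)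
qed

locale net3 =
  fixes V :: "'v set" and Es :: "'e set" and src tgt :: "'e \<Rightarrow> 'v" and \<rho> :: 'v
    and lab :: "'v \<Rightarrow> taxon"
  assumes net: "phylo_net3 V Es src tgt \<rho> lab"
begin

definition Er :: "('v \<times> 'v) set" where
  "Er = {(src e, tgt e) | e. e \<in> Es}"

lemma finV: "finite V" and finEs: "finite Es" and rootV: "\<rho> \<in> V"
  and src_V: "e \<in> Es \<Longrightarrow> src e \<in> V" and tgt_V: "e \<in> Es \<Longrightarrow> tgt e \<in> V"
  using net unfolding phylo_net3_def by auto

lemma acyc: "acyclic Er"
  using net unfolding phylo_net3_def Er_def by auto

lemma finEr: "finite Er"
proof -
  have "Er = (\<lambda>e. (src e, tgt e)) ` Es" unfolding Er_def by auto
  then show ?thesis using finEs by simp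
qed

lemma wfEr: "wf Er" using finite_acyclic_wf[OF finEr acyc] .
lemma wfEr': "wf (Er\<inverse>)" using finite_acyclic_wf_converse[OF finEr acyc] .

lemma Er_I: "e \<in> Es \<Longrightarrow> (src e, tgt e) \<in> Er" unfolding Er_def by auto

lemma tgt_not_root: "e \<in> Es \<Longrightarrow> tgt e \<noteq> \<rho>"
proof
  assume "e \<in> Es" "tgt e = \<rho>"
  then have "e \<in> {e \<in> Es. tgt e = \<rho>}" by auto
  moreover have "indeg Es tgt \<rho> = 0" using net unfolding phylo_net3_def by auto
  ultimately show False using finEs unfolding indeg_def by auto
qed

lemma outdeg_root: "outdeg Es src \<rho> = 2"
  using net unfolding phylo_net3_def by auto

lemma degs: "v \<in> V \<Longrightarrow> v \<noteq> \<rho> \<Longrightarrow>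
        (indeg Es tgt v = 1 \<and> outdeg Es src v = 2) \<or>
        (indeg Es tgt v = 1 \<and> outdeg Es src v = 0) \<or>
        (indeg Es tgt v = 2 \<and> outdeg Es src v = 1)"
  using net unfolding phylo_net3_def by blast

lemma outdeg_le2: "v \<in> V \<Longrightarrow> outdeg Es src v \<le> 2"
proof (cases "v = \<rho>")
  case True then show ?thesis using outdeg_root by simp
next
  case False
  assume "v \<in> V"
  then show ?thesis using degs[OF \<open>v \<in> V\<close> False] by auto
qed

lemma indeg_pos: "v \<in> V \<Longrightarrow> v \<noteq> \<rho> \<Longrightarrow> indeg Es tgt v \<noteq> 0"
  using degs by fastforce

lemma outdeg_pos: "e \<in> Es \<Longrightarrow> outdeg Es src (src e) \<noteq> 0"
proof
  assume "e \<in> Es" "outdeg Es src (src e) = 0"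
  then show False using finEs unfolding outdeg_def by auto
qed

lemma has_in_edge: "v \<in> V \<Longrightarrow> v \<noteq> \<rho> \<Longrightarrow> \<exists>e\<in>Es. tgt e = v"
  using indeg_pos unfolding indeg_def by (metis (mono_tags, lifting) card.empty empty_Collect_eq)

lemma has_out_edge: "outdeg Es src v \<noteq> 0 \<Longrightarrow> \<exists>e\<in>Es. src e = v"
  unfolding outdeg_def by (metis (mono_tags, lifting) card.empty empty_Collect_eq)

lemma reach_root: "v \<in> V \<Longrightarrow> (\<rho>, v) \<in> Er\<^sup>*"
proof (induction v rule: wf_induct_rule[OF wfEr])
  case (1 v)
  show ?case
  proof (cases "v = \<rho>")
    case True then show ?thesis by simp
  next
    case False
    then obtain e where "e \<in> Es" "tgt e = v" using has_in_edge 1 by blast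
    then have "(src e, v) \<in> Er" "src e \<in> V" using Er_I src_V by auto
    then show ?thesis using 1 by (meson rtrancl.rtrancl_into_rtrancl)
  qed
qed

lemma Er_path: "(u, v) \<in> Er\<^sup>* \<Longrightarrow> \<exists>q. is_path Es src tgt q u v"
  using rel_path[where Es'=Es and Es=Es and src=src and tgt=tgt] unfolding Er_def by blast

definition L where "L = leaves V Es src \<rho>"
definition lf :: "taxon \<Rightarrow> 'v" where "lf W = inv_into L lab W"

lemma bijL: "bij_betw lab L UNIV"
  using net unfolding phylo_net3_def L_def by auto

lemma lf_L: "lf W \<in> L" and lab_lf: "lab (lf W) = W"
  using bijL unfolding lf_def
  by (auto simp: bij_betw_def inv_into_into f_inv_into_f)

lemma lf_lab: "v \<in> L \<Longrightarrow> lf (lab v) = v"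
  using bijL unfolding lf_def by (simp add: bij_betw_def)

lemma L_iff: "v \<in> L \<longleftrightarrow> v \<in> V \<and> v \<noteq> \<rho> \<and> outdeg Es src v = 0"
  unfolding L_def leaves_def by auto

lemma lf_V: "lf W \<in> V" using lf_L L_iff by blast

lemma lf_noout: "e \<in> Es \<Longrightarrow> src e \<noteq> lf W"
  using lf_L L_iff outdeg_pos by metis

end

locale hist = net3 V Es src tgt \<rho> lab
  for V :: "'v set" and Es :: "'e set" and src tgt :: "'e \<Rightarrow> 'v" and \<rho> :: 'v and lab :: "'v \<Rightarrow> taxon" +
  fixes h :: "'e \<Rightarrow> taxon set set \<times> taxon set set \<times> taxon set set"
  assumes cons: "consistent_history V Es src tgt \<rho> lab h"
    and eok: "\<forall>e\<in>Es. \<exists>k. mchain k (fst (h e)) (fst (snd (h e))) (snd (snd (h e))) \<noteq> 0"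
begin

abbreviation P where "P e \<equiv> fst (h e)"
abbreviation Q where "Q e \<equiv> fst (snd (h e))"
abbreviation H where "H e \<equiv> snd (snd (h e))"
abbreviation bl where "bl v \<equiv> bottom_lineages Es src lab h v"
definition SW :: "taxon \<Rightarrow> ('v \<times> 'v) set" where
  "SW W = {(src e, tgt e) | e. e \<in> Es \<and> W \<in> \<Union>(P e)}"

lemma SW_Er: "SW W \<subseteq> Er" unfolding SW_def Er_def by auto
lemma SW_Er_rtr: "(u, v) \<in> (SW W)\<^sup>* \<Longrightarrow> (u, v) \<in> Er\<^sup>*"
  by (rule subsetD[OF rtrancl_mono[OF SW_Er]])
lemma SW_Er_tr: "(u, v) \<in> (SW W)\<^sup>+ \<Longrightarrow> (u, v) \<in> Er\<^sup>+"
  by (rule trancl_mono[OF _ SW_Er])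
lemma SW_I: "e \<in> Es \<Longrightarrow> W \<in> \<Union>(P e) \<Longrightarrow> (src e, tgt e) \<in> SW W"
  unfolding SW_def by auto

lemma cons': "v \<in> V - {\<rho>} \<Longrightarrow> bl v = \<Union>{P e | e. e \<in> Es \<and> tgt e = v} \<and>
   (\<forall>e1\<in>Es. \<forall>e2\<in>Es. tgt e1 = v \<and> tgt e2 = v \<and> e1 \<noteq> e2 \<longrightarrow> P e1 \<inter> P e2 = {})"
  using cons unfolding consistent_history_def by (rule bspec)

lemma SW_E: "(x, z) \<in> SW W \<Longrightarrow> \<exists>e. e \<in> Es \<and> src e = x \<and> tgt e = z \<and> W \<in> \<Union>(P e)"
  unfolding SW_def by blast

lemma bl_in: "v \<in> V \<Longrightarrow> v \<noteq> \<rho> \<Longrightarrow> bl v = \<Union>{P e | e. e \<in> Es \<and> tgt e = v}"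
proof -
  assume "v \<in> V" "v \<noteq> \<rho>"
  then have "v \<in> V - {\<rho>}" by simp
  from cons'[OF this] show ?thesis by (rule conjunct1)
qed

lemma P_sub: "e \<in> Es \<Longrightarrow> P e \<subseteq> bl (tgt e)"
proof -
  assume e: "e \<in> Es"
  have "P e \<in> {P e' | e'. e' \<in> Es \<and> tgt e' = tgt e}" using e by blast
  then have "P e \<subseteq> \<Union>{P e' | e'. e' \<in> Es \<and> tgt e' = tgt e}" by (rule Union_upper)
  then show ?thesis using bl_in[OF tgt_V[OF e] tgt_not_root[OF e]] by simp
qed

lemma Pdisj: "e1 \<in> Es \<Longrightarrow> e2 \<in> Es \<Longrightarrow> tgt e1 = tgt e2 \<Longrightarrow> e1 \<noteq> e2 \<Longrightarrow> P e1 \<inter> P e2 = {}"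
proof -
  assume a: "e1 \<in> Es" "e2 \<in> Es" "tgt e1 = tgt e2" "e1 \<noteq> e2"
  have "tgt e1 \<in> V - {\<rho>}" using tgt_V[OF a(1)] tgt_not_root[OF a(1)] by simp
  from cons'[OF this] have "\<forall>e1'\<in>Es. \<forall>e2'\<in>Es. tgt e1' = tgt e1 \<and> tgt e2' = tgt e1 \<and> e1' \<noteq> e2' \<longrightarrow> P e1' \<inter> P e2' = {}"
    by (rule conjunct2)
  then show ?thesis using a by simp
qed

lemma bl_out: "outdeg Es src v \<noteq> 0 \<Longrightarrow> bl v = \<Union>{Q e | e. e \<in> Es \<and> src e = v}"
  unfolding bottom_lineages_def by simp

lemma bl_leaf: "outdeg Es src v = 0 \<Longrightarrow> bl v = {{lab v}}"
  unfolding bottom_lineages_def by simp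

lemma Q_sub: "e \<in> Es \<Longrightarrow> Q e \<subseteq> bl (src e)"
proof -
  assume e: "e \<in> Es"
  have "Q e \<in> {Q e' | e'. e' \<in> Es \<and> src e' = src e}" using e by blast
  then have "Q e \<subseteq> \<Union>{Q e' | e'. e' \<in> Es \<and> src e' = src e}" by (rule Union_upper)
  then show ?thesis using bl_out[OF outdeg_pos[OF e]] by simp
qed

lemma mprops: "e \<in> Es \<Longrightarrow> \<Union>(Q e) = \<Union>(P e) \<and> (\<forall>b\<in>P e. \<exists>B\<in>Q e. b \<subseteq> B) \<and> (\<forall>S\<in>H e. \<exists>B\<in>Q e. S \<subseteq> B)
    \<and> (part (P e) \<longrightarrow> part (Q e) \<and> (\<forall>S\<in>H e. \<exists>s1 s2. s1 \<in> UU (P e) \<and> s2 \<in> UU (P e) \<and> s1 \<inter> s2 = {} \<and> s1 \<noteq> {} \<and> s2 \<noteq> {} \<and> S = s1 \<union> s2))"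
proof -
  assume "e \<in> Es"
  then obtain k where "mchain k (P e) (Q e) (H e) \<noteq> 0" using eok by blast
  then show ?thesis by (rule mchain_props)
qed

lemma UQ: "e \<in> Es \<Longrightarrow> \<Union>(Q e) = \<Union>(P e)" using mprops by (rule conjunct1)

lemma part_sub: "part X \<Longrightarrow> Y \<subseteq> X \<Longrightarrow> part Y"
  unfolding part_def by (meson subsetD)

lemma down_path: "v \<in> V \<Longrightarrow> W \<in> \<Union>(bl v) \<Longrightarrow> (v, lf W) \<in> (SW W)\<^sup>*"
proof (induction v rule: wf_induct_rule[OF wfEr'])
  case (1 v)
  show ?case
  proof (cases "outdeg Es src v = 0")
    case True
    then have "W = lab v" using 1(3) bl_leaf by simp
    moreover have "v \<noteq> \<rho>" using True outdeg_root by auto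
    ultimately have "lf W = v" using True 1(2) L_iff lf_lab by auto
    then show ?thesis by simp
  next
    case False
    then obtain e where e: "e \<in> Es" "src e = v" "W \<in> \<Union>(Q e)" using 1(3) bl_out by auto
    then have W: "W \<in> \<Union>(P e)" using UQ by auto
    then have "W \<in> \<Union>(bl (tgt e))" using P_sub e(1) by blast
    moreover have "(tgt e, v) \<in> Er\<inverse>" using Er_I e by auto
    ultimately have "(tgt e, lf W) \<in> (SW W)\<^sup>*" using 1 tgt_V e(1) by blast
    moreover have "(v, tgt e) \<in> SW W" using SW_I[OF e(1) W] e(2) by simp
    ultimately show ?thesis by (meson converse_rtrancl_into_rtrancl)
  qed
qed

lemma uniq_at:
  assumes "part (bl w)" "e1 \<in> Es" "e2 \<in> Es" "tgt e1 = w" "tgt e2 = w" "W \<in> \<Union>(P e1)" "W \<in> \<Union>(P e2)"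
  shows "e1 = e2"
proof (rule ccontr)
  assume ne: "e1 \<noteq> e2"
  obtain b1 b2 where b: "b1 \<in> P e1" "W \<in> b1" "b2 \<in> P e2" "W \<in> b2" using assms by auto
  have "b1 \<in> bl w" using P_sub[OF assms(2)] b(1) assms(4) by blast
  have "b2 \<in> bl w" using P_sub[OF assms(3)] b(3) assms(5) by blast
  then have "b1 = b2" using assms(1) b \<open>b1 \<in> bl w\<close> unfolding part_def by blast
  then show False using Pdisj[OF assms(2,3) _ ne] assms b by auto
qed

lemma N1: "v \<in> V \<Longrightarrow> part (bl v)"
proof (induction v rule: wf_induct_rule[OF wf_trancl[OF wfEr']])
  case (1 v)
  have IH: "\<And>z. (v, z) \<in> Er\<^sup>+ \<Longrightarrow> part (bl z)"
  proof -
    fix z assume "(v, z) \<in> Er\<^sup>+"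
    then have "(z, v) \<in> (Er\<inverse>)\<^sup>+" by (simp add: trancl_converse)
    moreover have "z \<in> V" using \<open>(v, z) \<in> Er\<^sup>+\<close>
    proof (cases rule: tranclE)
      case base then show ?thesis unfolding Er_def using tgt_V by auto
    next
      case (step c) then show ?thesis unfolding Er_def using tgt_V by auto
    qed
    ultimately show "part (bl z)" using 1 by blast
  qed
  show ?case
  proof (cases "outdeg Es src v = 0")
    case True
    then show ?thesis using bl_leaf unfolding part_def by simp
  next
    case False
    have partQ: "part (Q c)" if "c \<in> Es" "src c = v" for c
    proof -
      have "(v, tgt c) \<in> Er\<^sup>+" using Er_I[OF that(1)] that(2) by auto
      then have "part (bl (tgt c))" by (rule IH)
      then have "part (P c)" using P_sub[OF that(1)] part_sub by blast
      then show ?thesis using mprops[OF that(1)] by blast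
    qed
    have noW: False if c: "c1 \<in> Es" "src c1 = v" "c2 \<in> Es" "src c2 = v" "c1 \<noteq> c2"
       "W \<in> \<Union>(P c1)" "W \<in> \<Union>(P c2)" "(tgt c1, tgt c2) \<in> (SW W)\<^sup>*" for c1 c2 W
    proof -
      have uq: "e1 = e2" if "e1 \<in> Es" "e2 \<in> Es" "tgt e1 = z" "tgt e2 = z" "W \<in> \<Union>(P e1)" "W \<in> \<Union>(P e2)"
        "(v, z) \<in> Er\<^sup>+" for e1 e2 z
        using uniq_at[OF IH[OF that(7)] that(1-6)] .
      show False
      proof (cases "tgt c1 = tgt c2")
        case True
        have "(v, tgt c1) \<in> Er\<^sup>+" using Er_I[OF c(1)] c(2) by (metis r_into_trancl')
        then show False using uq[OF c(1) c(3) refl True[symmetric] c(6) c(7)] c(5) by blast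
      next
        case False
        then have "(tgt c1, tgt c2) \<in> (SW W)\<^sup>+" using c(8) by (simp add: rtrancl_eq_or_trancl)
        then obtain y where y: "(tgt c1, y) \<in> (SW W)\<^sup>*" "(y, tgt c2) \<in> SW W"
          by (blast dest: tranclD2)
        from SW_E[OF y(2)] obtain e' where e': "e' \<in> Es" "src e' = y" "tgt e' = tgt c2" "W \<in> \<Union>(P e')"
          by blast
        have "(v, tgt c2) \<in> Er\<^sup>+" using Er_I[OF c(3)] c(4) by (metis r_into_trancl')
        then have "e' = c2" using uq[OF e'(1) c(3) e'(3) refl e'(4) c(7)] by blast
        then have "y = v" using e'(2) c(4) by simp
        then have "(tgt c1, v) \<in> Er\<^sup>*" using SW_Er_rtr[OF y(1)] by simp
        then have "(v, v) \<in> Er\<^sup>+" using Er_I[OF c(1)] c(2) by (metis rtrancl_into_trancl2)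
        then show False using acyc unfolding acyclic_def by simp
      qed
    qed
    show ?thesis unfolding part_def
    proof (intro conjI ballI impI)
      fix b assume "b \<in> bl v"
      then obtain c where "c \<in> Es" "src c = v" "b \<in> Q c" using bl_out[OF False] by auto
      then show "b \<noteq> {}" using partQ[OF \<open>c \<in> Es\<close> \<open>src c = v\<close>] unfolding part_def by blast
    next
      fix b1 b2 assume b12: "b1 \<in> bl v" "b2 \<in> bl v" "b1 \<noteq> b2"
      obtain c1 where c1: "c1 \<in> Es" "src c1 = v" "b1 \<in> Q c1" using bl_out[OF False] b12 by auto
      obtain c2 where c2: "c2 \<in> Es" "src c2 = v" "b2 \<in> Q c2" using bl_out[OF False] b12 by auto
      show "b1 \<inter> b2 = {}"
      proof (rule ccontr)
        assume "b1 \<inter> b2 \<noteq> {}"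
        then obtain W where W: "W \<in> b1" "W \<in> b2" by auto
        show False
        proof (cases "c1 = c2")
          case True
          then show False using partQ[OF c1(1,2)] c1 c2 b12 W unfolding part_def by blast
        next
          case False
          have W1: "W \<in> \<Union>(P c1)" using UQ[OF c1(1)] c1 W by auto
          have W2: "W \<in> \<Union>(P c2)" using UQ[OF c2(1)] c2 W by auto
          have d1: "(tgt c1, lf W) \<in> (SW W)\<^sup>*"
            using down_path[OF tgt_V[OF c1(1)]] W1 P_sub[OF c1(1)] by blast
          have d2: "(tgt c2, lf W) \<in> (SW W)\<^sup>*"
            using down_path[OF tgt_V[OF c2(1)]] W2 P_sub[OF c2(1)] by blast
          have "(tgt c1, tgt c2) \<in> (SW W)\<^sup>* \<or> (tgt c2, tgt c1) \<in> (SW W)\<^sup>*"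
          proof (rule chain_common[OF d1 d2])
            fix x y z assume xyz: "(x, z) \<in> SW W" "(y, z) \<in> SW W" "(tgt c1, z) \<in> (SW W)\<^sup>+" "(tgt c2, z) \<in> (SW W)\<^sup>+"
            obtain e1 where e1: "e1 \<in> Es" "src e1 = x" "tgt e1 = z" "W \<in> \<Union>(P e1)" using SW_E[OF xyz(1)] by blast
            obtain e2 where e2: "e2 \<in> Es" "src e2 = y" "tgt e2 = z" "W \<in> \<Union>(P e2)" using SW_E[OF xyz(2)] by blast
            have "(tgt c1, z) \<in> Er\<^sup>+" using xyz(3) SW_Er_tr by blast
            then have "(v, z) \<in> Er\<^sup>+" using Er_I[OF c1(1)] c1(2) by (metis trancl_into_trancl2)
            then have "e1 = e2" using uniq_at[OF IH e1(1) e2(1) e1(3) e2(3) e1(4) e2(4)] by blast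
            then show "x = y" using e1 e2 by simp
          qed
          then show False
          proof
            assume "(tgt c1, tgt c2) \<in> (SW W)\<^sup>*"
            then show False by (rule noW[OF c1(1,2) c2(1,2) False W1 W2])
          next
            assume "(tgt c2, tgt c1) \<in> (SW W)\<^sup>*"
            moreover have "c2 \<noteq> c1" using False by simp
            ultimately show False using noW[OF c2(1,2) c1(1,2) _ W2 W1] by blast
          qed
        qed
      qed
    qed
  qed
qed

end

context hist begin

lemma part_unique: "part X \<Longrightarrow> b1 \<in> X \<Longrightarrow> b2 \<in> X \<Longrightarrow> W \<in> b1 \<Longrightarrow> W \<in> b2 \<Longrightarrow> b1 = b2"
  unfolding part_def by blast

lemma uniq: "e1 \<in> Es \<Longrightarrow> e2 \<in> Es \<Longrightarrow> tgt e1 = tgt e2 \<Longrightarrow> W \<in> \<Union>(P e1) \<Longrightarrow> W \<in> \<Union>(P e2) \<Longrightarrow> e1 = e2"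
  using uniq_at[OF N1[OF tgt_V] _ _ refl] by metis

lemma N2:
  assumes e: "e1 \<in> Es" "e2 \<in> Es" "W \<in> \<Union>(P e1)" "W \<in> \<Union>(P e2)"
  shows "e1 = e2 \<or> (tgt e1, src e2) \<in> (SW W)\<^sup>* \<or> (tgt e2, src e1) \<in> (SW W)\<^sup>*"
proof -
  have d1: "(tgt e1, lf W) \<in> (SW W)\<^sup>*"
    using down_path[OF tgt_V[OF e(1)]] e(3) P_sub[OF e(1)] by blast
  have d2: "(tgt e2, lf W) \<in> (SW W)\<^sup>*"
    using down_path[OF tgt_V[OF e(2)]] e(4) P_sub[OF e(2)] by blast
  have gen: "\<And>x y z. (x, z) \<in> SW W \<Longrightarrow> (y, z) \<in> SW W \<Longrightarrow> x = y"
  proof -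
    fix x y z assume xyz: "(x, z) \<in> SW W" "(y, z) \<in> SW W"
    obtain a1 where a1: "a1 \<in> Es" "src a1 = x" "tgt a1 = z" "W \<in> \<Union>(P a1)" using SW_E[OF xyz(1)] by blast
    obtain a2 where a2: "a2 \<in> Es" "src a2 = y" "tgt a2 = z" "W \<in> \<Union>(P a2)" using SW_E[OF xyz(2)] by blast
    have "a1 = a2" using uniq[OF a1(1) a2(1) _ a1(4) a2(4)] a1(3) a2(3) by simp
    then show "x = y" using a1 a2 by simp
  qed
  have step: "(tgt a, src b) \<in> (SW W)\<^sup>*" if ab: "a \<in> Es" "b \<in> Es" "W \<in> \<Union>(P b)" "a \<noteq> b"
      "(tgt a, tgt b) \<in> (SW W)\<^sup>*" "W \<in> \<Union>(P a)" for a b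
  proof (cases "tgt a = tgt b")
    case True
    then show ?thesis using uniq[OF ab(1,2) True ab(6) ab(3)] ab(4) by simp
  next
    case False
    then have "(tgt a, tgt b) \<in> (SW W)\<^sup>+" using ab(5) by (simp add: rtrancl_eq_or_trancl)
    then obtain y where y: "(tgt a, y) \<in> (SW W)\<^sup>*" "(y, tgt b) \<in> SW W"
      by (blast dest: tranclD2)
    have "(src b, tgt b) \<in> SW W" using SW_I[OF ab(2,3)] .
    then have "y = src b" using gen[OF y(2)] by simp
    then show ?thesis using y(1) by simp
  qed
  have "(tgt e1, tgt e2) \<in> (SW W)\<^sup>* \<or> (tgt e2, tgt e1) \<in> (SW W)\<^sup>*"
    by (rule chain_common[OF d1 d2]) (rule gen)
  then show ?thesis
  proof
    assume "(tgt e1, tgt e2) \<in> (SW W)\<^sup>*"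
    then show ?thesis using step[OF e(1) e(2) e(4) _ _ e(3)] by blast
  next
    assume "(tgt e2, tgt e1) \<in> (SW W)\<^sup>*"
    then show ?thesis using step[OF e(2) e(1) e(3) _ _ e(4)] by blast
  qed
qed

lemma up_path: "v \<in> V \<Longrightarrow> W \<in> \<Union>(bl v) \<Longrightarrow> (\<rho>, v) \<in> (SW W)\<^sup>*"
proof (induction v rule: wf_induct_rule[OF wfEr])
  case (1 v)
  show ?case
  proof (cases "v = \<rho>")
    case True then show ?thesis by simp
  next
    case False
    obtain b where b: "b \<in> bl v" "W \<in> b" using 1(3) by blast
    then have "b \<in> \<Union>{P e | e. e \<in> Es \<and> tgt e = v}" using bl_in[OF 1(2) False] by simp
    then obtain e where e: "e \<in> Es" "tgt e = v" "b \<in> P e" by blast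
    then have We: "W \<in> \<Union>(P e)" using b(2) by blast
    then have "W \<in> \<Union>(Q e)" using UQ[OF e(1)] by simp
    then have "W \<in> \<Union>(bl (src e))" using Q_sub[OF e(1)] by blast
    moreover have "(src e, v) \<in> Er" using Er_I[OF e(1)] e(2) by simp
    ultimately have "(\<rho>, src e) \<in> (SW W)\<^sup>*" using 1(1) src_V[OF e(1)] by blast
    moreover have "(src e, v) \<in> SW W" using SW_I[OF e(1) We] e(2) by simp
    ultimately show ?thesis by (rule rtrancl_into_rtrancl)
  qed
qed

lemma tax_root: "W \<in> \<Union>(bl \<rho>)"
proof -
  have L: "lf W \<in> V" "lf W \<noteq> \<rho>" "outdeg Es src (lf W) = 0" using lf_L[of W] unfolding L_iff by simp_all
  then have "W \<in> \<Union>(bl (lf W))" using bl_leaf lab_lf by simp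
  then have r: "(\<rho>, lf W) \<in> (SW W)\<^sup>*" by (rule up_path[OF L(1)])
  have "\<exists>z. (\<rho>, z) \<in> SW W" using r
  proof (cases rule: converse_rtranclE)
    case base then show ?thesis using L(2) by simp
  next
    case (step z) then show ?thesis by blast
  qed
  then obtain z where "(\<rho>, z) \<in> SW W" by blast
  from SW_E[OF this] obtain e where e: "e \<in> Es" "src e = \<rho>" "W \<in> \<Union>(P e)" by blast
  then have "W \<in> \<Union>(Q e)" using UQ[OF e(1)] by simp
  then obtain B where "B \<in> Q e" "W \<in> B" by blast
  then have "B \<in> bl \<rho>" using subsetD[OF Q_sub[OF e(1)]] e(2) by simp
  then show ?thesis using \<open>W \<in> B\<close> by blast
qed

lemma M3l: "e \<in> Es \<Longrightarrow> b \<in> P e \<Longrightarrow> \<exists>B\<in>Q e. b \<subseteq> B"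
proof -
  assume "e \<in> Es" "b \<in> P e"
  from mprops[OF this(1)] have "\<forall>b\<in>P e. \<exists>B\<in>Q e. b \<subseteq> B" by (rule conjunct1[OF conjunct2])
  then show ?thesis using \<open>b \<in> P e\<close> by (rule bspec)
qed

lemma M6l: "e \<in> Es \<Longrightarrow> S \<in> H e \<Longrightarrow> \<exists>B\<in>Q e. S \<subseteq> B"
proof -
  assume "e \<in> Es" "S \<in> H e"
  from mprops[OF this(1)] have "\<forall>S\<in>H e. \<exists>B\<in>Q e. S \<subseteq> B" by (rule conjunct1[OF conjunct2[OF conjunct2]])
  then show ?thesis using \<open>S \<in> H e\<close> by (rule bspec)
qed

lemma M24l: "e \<in> Es \<Longrightarrow> part (P e) \<Longrightarrow> part (Q e) \<and> (\<forall>S\<in>H e. \<exists>s1 s2. s1 \<in> UU (P e) \<and> s2 \<in> UU (P e) \<and> s1 \<inter> s2 = {} \<and> s1 \<noteq> {} \<and> s2 \<noteq> {} \<and> S = s1 \<union> s2)"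
proof -
  assume "e \<in> Es" "part (P e)"
  from mprops[OF this(1)] have "part (P e) \<longrightarrow> part (Q e) \<and> (\<forall>S\<in>H e. \<exists>s1 s2. s1 \<in> UU (P e) \<and> s2 \<in> UU (P e) \<and> s1 \<inter> s2 = {} \<and> s1 \<noteq> {} \<and> s2 \<noteq> {} \<and> S = s1 \<union> s2)"
    by (rule conjunct2[OF conjunct2[OF conjunct2]])
  then show ?thesis using \<open>part (P e)\<close> by (rule mp)
qed

lemma part_P: "e \<in> Es \<Longrightarrow> part (P e)"
  using part_sub[OF N1[OF tgt_V] P_sub] by blast

lemma part_Q: "e \<in> Es \<Longrightarrow> part (Q e)"
  using M24l[OF _ part_P] by blast

lemma mono_step:
  assumes "(u, v) \<in> SW W" "b \<in> bl v" "W \<in> b"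
  shows "\<exists>b'\<in>bl u. W \<in> b' \<and> b \<subseteq> b'"
proof -
  obtain e where e: "e \<in> Es" "src e = u" "tgt e = v" "W \<in> \<Union>(P e)" using SW_E[OF assms(1)] by blast
  from e(4) obtain b0 where b0: "b0 \<in> P e" "W \<in> b0" by blast
  have "b0 \<in> bl v" using subsetD[OF P_sub[OF e(1)] b0(1)] e(3) by simp
  have "part (bl v)" using N1[OF tgt_V[OF e(1)]] e(3) by simp
  have "b0 = b" by (rule part_unique[OF \<open>part (bl v)\<close> \<open>b0 \<in> bl v\<close> assms(2) b0(2) assms(3)])
  obtain B where B: "B \<in> Q e" "b0 \<subseteq> B" using M3l[OF e(1) b0(1)] by blast
  have "B \<in> bl u" using subsetD[OF Q_sub[OF e(1)] B(1)] e(2) by simp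
  moreover have "W \<in> B" using B(2) b0(2) by blast
  ultimately show ?thesis using B(2) \<open>b0 = b\<close> by blast
qed

lemma mono:
  assumes "(u, v) \<in> (SW W)\<^sup>*" "b \<in> bl v" "W \<in> b"
  shows "\<exists>b'\<in>bl u. W \<in> b' \<and> b \<subseteq> b'"
  using assms(1)
proof (induction u rule: converse_rtrancl_induct)
  case base
  then show ?case using assms by blast
next
  case (step u y)
  then obtain b' where b': "b' \<in> bl y" "W \<in> b'" "b \<subseteq> b'" by blast
  obtain b'' where "b'' \<in> bl u" "W \<in> b''" "b' \<subseteq> b''" using mono_step[OF step(1) b'(1,2)] by blast
  then show ?case using b'(3) by blast
qed

end

context net3 begin

lemma leaf_ext:
  assumes "is_path Es src tgt q \<rho> (lf W)" "is_path Es src tgt (q @ rest) \<rho> w'"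
  shows "rest = []"
proof (rule ccontr)
  assume "rest \<noteq> []"
  then obtain e' rs where rs: "rest = e' # rs" by (cases rest) auto
  obtain mid where mid: "is_path Es src tgt q \<rho> mid" "is_path Es src tgt rest mid w'"
    using assms(2) is_path_append by metis
  have "mid = lf W" using is_path_det[OF mid(1) assms(1)] .
  then have "e' \<in> Es" "src e' = lf W" using mid(2) rs by auto
  then show False using lf_noout by blast
qed

lemma lf_inj: "lf W = lf W' \<Longrightarrow> W = W'"
  by (metis lab_lf)

lemma some_other: "\<exists>W'::taxon. W' \<noteq> W"
  by (cases W) (auto intro: exI[of _ A] exI[of _ B])

lemma path_lf: "\<exists>q. is_path Es src tgt q \<rho> (lf W)"
  using Er_path[OF reach_root[OF lf_V]] .

lemma parental_nonempty: "\<exists>t. t \<in> parental_trees V Es src tgt \<rho> lab"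
proof -
  define p where "p W = (SOME q. is_path Es src tgt q \<rho> (lf W))" for W
  have pp: "is_path Es src tgt (p W) \<rho> (lf W)" for W
    unfolding p_def using path_lf by (rule someI_ex)
  define G where "G = {n. \<forall>W. n \<le> length (p W) \<and> take n (p W) = take n (p A)}"
  have "0 \<in> G" unfolding G_def by simp
  have finG: "finite G"
  proof (rule finite_subset)
    show "G \<subseteq> {..length (p A)}" unfolding G_def by auto
  qed simp
  define m where "m = Max G"
  have mG: "m \<in> G" unfolding m_def using Max_in[OF finG] \<open>0 \<in> G\<close> by blast
  have tk: "take m (p W) = take m (p A)" "m \<le> length (p W)" for W using mG unfolding G_def by auto
  have len: "m < length (p W)" for W
  proof (rule ccontr)
    assume "\<not> m < length (p W)"
    then have "length (p W) = m" using tk(2)[of W] by simp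
    then have pW: "p W = take m (p A)" using tk(1)[of W] by simp
    obtain W' where W': "W' \<noteq> W" using some_other by blast
    have "p W' = take m (p W') @ drop m (p W')" by simp
    then have "p W' = p W @ drop m (p W')" using tk(1)[of W'] pW by simp
    then have "is_path Es src tgt (p W @ drop m (p W')) \<rho> (lf W')" using pp[of W'] by simp
    then have "drop m (p W') = []" using leaf_ext[OF pp[of W]] by blast
    then have "p W' = p W" using \<open>p W' = p W @ drop m (p W')\<close> by simp
    then have "lf W' = lf W" using pp[of W'] pp[of W] is_path_det by metis
    then show False using W' lf_inj by blast
  qed
  define q0 where "q0 = take m (p A)"
  define ed where "ed W = p W ! m" for W
  have tkS: "take (Suc m) (p W) = q0 @ [ed W]" for W
    unfolding q0_def ed_def using tk(1)[of W] len[of W] by (simp add: take_Suc_conv_app_nth)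
  obtain u where u: "is_path Es src tgt q0 \<rho> u"
    using pp[of A] unfolding q0_def by (metis append_take_drop_id is_path_append)
  have ed_props: "ed W \<in> Es \<and> src (ed W) = u" for W
  proof -
    have "p W = take (Suc m) (p W) @ drop (Suc m) (p W)" by simp
    then have "is_path Es src tgt ((q0 @ [ed W]) @ drop (Suc m) (p W)) \<rho> (lf W)" using pp[of W] tkS[of W] by simp
    then obtain mid where "is_path Es src tgt (q0 @ [ed W]) \<rho> mid" using is_path_append by metis
    then obtain mid' where "is_path Es src tgt q0 \<rho> mid'" "is_path Es src tgt [ed W] mid' mid"
      using is_path_append by metis
    moreover have "mid' = u" using is_path_det[OF \<open>is_path Es src tgt q0 \<rho> mid'\<close> u] .
    ultimately show ?thesis by simp
  qed
  have notall: "\<exists>W. ed W \<noteq> ed A"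
  proof (rule ccontr)
    assume "\<not> (\<exists>W. ed W \<noteq> ed A)"
    then have "\<forall>W. ed W = ed A" by blast
    then have "Suc m \<in> G" unfolding G_def using tkS len by (simp add: Suc_le_eq)
    then have "Suc m \<le> m" unfolding m_def using finG by (simp add: Max_ge)
    then show False by simp
  qed
  have uV: "u \<in> V" using ed_props[of A] src_V by metis
  have card2: "card {e \<in> Es. src e = u} \<le> 2" using outdeg_le2[OF uV] unfolding outdeg_def .
  have pref: "prefix (q0 @ [ed X]) (p W) \<longleftrightarrow> ed W = ed X" for X W
  proof -
    have "prefix (q0 @ [ed X]) (p W) \<longleftrightarrow> take (Suc m) (p W) = q0 @ [ed X]"
      unfolding prefix_take_iff using tk(2)[of A] len[of A] by (simp add: q0_def)
    also have "\<dots> \<longleftrightarrow> ed W = ed X" using tkS[of W] by simp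
    finally show ?thesis .
  qed
  have node: "q0 @ [ed X] \<in> mul_tree_nodes V Es src tgt \<rho>" for X
  proof -
    have "is_path Es src tgt (q0 @ [ed X]) \<rho> (tgt (ed X))" using u ed_props[of X] by (auto simp: is_path_append)
    then show ?thesis unfolding mul_tree_nodes_def using tgt_V ed_props[of X] by blast
  qed
  have leafc: "\<forall>W. mul_tree_leaf_copy V Es src tgt \<rho> lab W (p W)"
    unfolding mul_tree_leaf_copy_def using pp lf_L lab_lf unfolding L_def by blast
  have mk: "T \<in> parental_trees V Es src tgt \<rho> lab" if "card T = 2" "T = {W. ed W = ed X}" for T X
  proof -
    have "T = {W. prefix (q0 @ [ed X]) (p W)}" using that(2) pref by simp
    then have "\<exists>q\<in>mul_tree_nodes V Es src tgt \<rho>. T = {W. prefix q (p W)}" using node[of X] by blast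
    then have "(\<forall>W. mul_tree_leaf_copy V Es src tgt \<rho> lab W (p W)) \<and> (\<exists>q\<in>mul_tree_nodes V Es src tgt \<rho>. T = {W. prefix q (p W)})"
      using leafc by blast
    then have "\<exists>p. (\<forall>W. mul_tree_leaf_copy V Es src tgt \<rho> lab W (p W)) \<and> (\<exists>q\<in>mul_tree_nodes V Es src tgt \<rho>. T = {W. prefix q (p W)})"
      by (rule exI[where x=p])
    then show ?thesis unfolding parental_trees_def using that(1) by (intro CollectI conjI)
  qed
  have all3: "W = A \<or> W = B \<or> W = C" for W by (cases W) auto
  obtain W0 where W0: "ed W0 \<noteq> ed A" using notall by blast
  show ?thesis
  proof (cases "ed A = ed B")
    case True
    then have "W0 = C" using W0 all3[of W0] by auto
    then have "ed C \<noteq> ed A" using W0 by simp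
    have "{W. ed W = ed A} = {A, B}"
    proof (rule set_eqI)
      fix W show "W \<in> {W. ed W = ed A} \<longleftrightarrow> W \<in> {A, B}" using all3[of W] True \<open>ed C \<noteq> ed A\<close> by auto
    qed
    then have eq: "{A, B} = {W. ed W = ed A}" by (rule sym)
    show ?thesis by (rule exI, rule mk[OF _ eq]) simp
  next
    case F1: False
    show ?thesis
    proof (cases "ed A = ed C")
      case True
      have "{W. ed W = ed A} = {A, C}"
      proof (rule set_eqI)
        fix W show "W \<in> {W. ed W = ed A} \<longleftrightarrow> W \<in> {A, C}" using all3[of W] True F1 by auto
      qed
      then have eq: "{A, C} = {W. ed W = ed A}" by (rule sym)
    show ?thesis by (rule exI, rule mk[OF _ eq]) simp
    next
      case F2: False
      show ?thesis
      proof (cases "ed B = ed C")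
        case True
        have "{W. ed W = ed B} = {B, C}"
        proof (rule set_eqI)
          fix W show "W \<in> {W. ed W = ed B} \<longleftrightarrow> W \<in> {B, C}" using all3[of W] True F1 by auto
        qed
        then have eq: "{B, C} = {W. ed W = ed B}" by (rule sym)
    show ?thesis by (rule exI, rule mk[OF _ eq]) simp
      next
        case F3: False
        have "{ed A, ed B, ed C} \<subseteq> {e \<in> Es. src e = u}" using ed_props by auto
        moreover have "card {ed A, ed B, ed C} = 3" using F1 F2 F3 by simp
        moreover have "finite {e \<in> Es. src e = u}" using finEs by simp
        ultimately have "3 \<le> card {e \<in> Es. src e = u}" using card_mono by metis
        then show ?thesis using card2 by simp
      qed
    qed
  qed
qed

end

context hist begin

lemma SW_alt: "SW W = {(src e, tgt e) | e. e \<in> {e \<in> Es. W \<in> \<Union>(P e)}}"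
  unfolding SW_def by simp

lemma created_in_W:
  assumes e: "e \<in> Es" and X: "{X} \<in> P e" and Y: "{Y} \<in> P e" and Z: "Z \<notin> \<Union>(P e)"
    and XY: "X \<noteq> Y" and XZ: "Z \<noteq> X" "Z \<noteq> Y" and all3: "\<And>W. W = X \<or> W = Y \<or> W = Z"
  shows "{X, Y} \<in> parental_trees V Es src tgt \<rho> lab"
proof -
  obtain r where r: "is_path Es src tgt r \<rho> (src e)" using Er_path[OF reach_root[OF src_V[OF e]]] by blast
  have dn: "\<exists>d. is_path Es src tgt d (tgt e) (lf W)" if "{W} \<in> P e" for W
  proof -
    have "{W} \<in> bl (tgt e)" using subsetD[OF P_sub[OF e] that] .
    then have "W \<in> \<Union>(bl (tgt e))" by blast
    then have "(tgt e, lf W) \<in> (SW W)\<^sup>*" by (rule down_path[OF tgt_V[OF e]])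
    then show ?thesis using Er_path SW_Er_rtr by blast
  qed
  obtain dX where dX: "is_path Es src tgt dX (tgt e) (lf X)" using dn[OF X] by blast
  obtain dY where dY: "is_path Es src tgt dY (tgt e) (lf Y)" using dn[OF Y] by blast
  have "outdeg Es src (lf Z) = 0" using lf_L[of Z] unfolding L_iff by simp
  then have "Z \<in> \<Union>(bl (lf Z))" using bl_leaf lab_lf by simp
  then have rz: "(\<rho>, lf Z) \<in> (SW Z)\<^sup>*" by (rule up_path[OF lf_V])
  have rz': "(\<rho>, lf Z) \<in> {(src e, tgt e) | e. e \<in> {e \<in> Es. Z \<in> \<Union>(P e)}}\<^sup>*" using rz unfolding SW_alt .
  have sub: "{e \<in> Es. Z \<in> \<Union>(P e)} \<subseteq> Es" by (rule Collect_subset)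
  obtain pz where pz: "is_path Es src tgt pz \<rho> (lf Z)" "set pz \<subseteq> {e \<in> Es. Z \<in> \<Union>(P e)}"
    using rel_path[OF rz' sub] by blast
  have enz: "e \<notin> set pz"
  proof
    assume "e \<in> set pz"
    then have "e \<in> {e \<in> Es. Z \<in> \<Union>(P e)}" using pz(2) by blast
    then show False using Z by simp
  qed
  define p where "p W = (if W = X then r @ (e # dX) else if W = Y then r @ (e # dY) else pz)" for W
  have pp: "is_path Es src tgt (p W) \<rho> (lf W)" for W
  proof -
    have eX: "is_path Es src tgt (e # dX) (src e) (lf X)" using e dX by simp
    have rX: "is_path Es src tgt (r @ (e # dX)) \<rho> (lf X)"
      using is_path_append[of Es src tgt r "e # dX" \<rho> "lf X"] r eX by blast
    have eY: "is_path Es src tgt (e # dY) (src e) (lf Y)" using e dY by simp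
    have rY: "is_path Es src tgt (r @ (e # dY)) \<rho> (lf Y)"
      using is_path_append[of Es src tgt r "e # dY" \<rho> "lf Y"] r eY by blast
    have "W = X \<or> W = Y \<or> W = Z" by (rule all3)
    then show ?thesis
    proof (elim disjE)
      assume "W = X" then show ?thesis using rX by (simp add: p_def)
    next
      assume "W = Y" then show ?thesis using rY XY by (simp add: p_def)
    next
      assume "W = Z" then show ?thesis using pz(1) XZ by (simp add: p_def)
    qed
  qed
  have leafc: "\<forall>W. mul_tree_leaf_copy V Es src tgt \<rho> lab W (p W)"
    unfolding mul_tree_leaf_copy_def using pp lf_L lab_lf unfolding L_def by blast
  have node: "r @ [e] \<in> mul_tree_nodes V Es src tgt \<rho>"
  proof -
    have "is_path Es src tgt [e] (src e) (tgt e)" using e by simp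
    then have "is_path Es src tgt (r @ [e]) \<rho> (tgt e)" using is_path_append[of Es src tgt r "[e]" \<rho> "tgt e"] r by blast
    then show ?thesis unfolding mul_tree_nodes_def using tgt_V[OF e] by blast
  qed
  have T: "{X, Y} = {W. prefix (r @ [e]) (p W)}"
  proof (rule set_eqI)
    fix W
    have "W = X \<or> W = Y \<or> W = Z" by (rule all3)
    moreover have "\<not> prefix (r @ [e]) pz" using enz unfolding prefix_def by auto
    ultimately show "W \<in> {X, Y} \<longleftrightarrow> W \<in> {W. prefix (r @ [e]) (p W)}"
      unfolding p_def by (auto simp: prefix_def)
  qed
  have "\<exists>p. (\<forall>W. mul_tree_leaf_copy V Es src tgt \<rho> lab W (p W)) \<and> (\<exists>q\<in>mul_tree_nodes V Es src tgt \<rho>. {X, Y} = {W. prefix q (p W)})"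
    using leafc node T by blast
  moreover have "card {X, Y} = 2" using XY by simp
  ultimately show ?thesis unfolding parental_trees_def by (intro CollectI conjI)
qed

end

lemma single_UU: "part P \<Longrightarrow> {W} \<in> UU P \<Longrightarrow> {W} \<in> P"
proof -
  assume p: "part P" "{W} \<in> UU P"
  then obtain A' where A': "A' \<subseteq> P" "{W} = \<Union>A'" unfolding UU_def by blast
  then obtain b where b: "b \<in> A'" "W \<in> b" by (metis UnionE insertI1)
  have "b \<subseteq> {W}" using A'(2) b(1) by blast
  then have "b = {W}" using b(2) by blast
  then show ?thesis using A'(1) b(1) by blast
qed

lemma key1: "s \<subseteq> {X, Y} \<Longrightarrow> X \<notin> s \<Longrightarrow> s \<noteq> {} \<Longrightarrow> s = {Y}"
  by auto

lemma key2: "s \<subseteq> {X, Y} \<Longrightarrow> Y \<notin> s \<Longrightarrow> s \<noteq> {} \<Longrightarrow> s = {X}"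
  by auto

lemma split2:
  assumes "part P" "s1 \<in> UU P" "s2 \<in> UU P" "s1 \<inter> s2 = {}" "s1 \<noteq> {}" "s2 \<noteq> {}" "{X, Y} = s1 \<union> s2" "X \<noteq> Y"
  shows "{X} \<in> P \<and> {Y} \<in> P"
proof -
  have sub: "s1 \<subseteq> {X, Y}" "s2 \<subseteq> {X, Y}" using assms(7) by auto
  have "(s1 = {X} \<and> s2 = {Y}) \<or> (s1 = {Y} \<and> s2 = {X})"
  proof (cases "X \<in> s1")
    case True
    then have "X \<notin> s2" using assms(4) by auto
    then have s2: "s2 = {Y}" using key1[OF sub(2) _ assms(6)] by simp
    then have "Y \<notin> s1" using assms(4) by auto
    then have "s1 = {X}" using key2[OF sub(1) _ assms(5)] by simp
    then show ?thesis using s2 by simp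
  next
    case False
    then have s1: "s1 = {Y}" using key1[OF sub(1) _ assms(5)] by simp
    then have "Y \<notin> s2" using assms(4) by auto
    then have "s2 = {X}" using key2[OF sub(2) _ assms(6)] by simp
    then show ?thesis using s1 by simp
  qed
  then show ?thesis using single_UU[OF assms(1)] assms(2,3) by auto
qed

lemma three:
  assumes "part P" "{X} \<in> P" "{Y} \<in> P" "Z \<in> \<Union>P" "X \<noteq> Y" "Z \<noteq> X" "Z \<noteq> Y"
    and all3: "\<And>W. W = X \<or> W = Y \<or> W = Z"
  shows "P = {{X}, {Y}, {Z}}"
proof -
  obtain b where b: "b \<in> P" "Z \<in> b" using assms(4) by blast
  have dj: "b' \<inter> b'' = {}" if "b' \<in> P" "b'' \<in> P" "b' \<noteq> b''" for b' b''
    using assms(1) that unfolding part_def by blast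
  have "b \<noteq> {X}" using b(2) assms(6) by auto
  then have bX: "b \<inter> {X} = {}" using dj[OF b(1) assms(2)] by simp
  have "b \<noteq> {Y}" using b(2) assms(7) by auto
  then have bY: "b \<inter> {Y} = {}" using dj[OF b(1) assms(3)] by simp
  have "\<forall>W\<in>b. W = Z"
  proof
    fix W assume "W \<in> b"
    have "W = X \<or> W = Y \<or> W = Z" by (rule all3)
    then show "W = Z"
    proof (elim disjE)
      assume "W = X" then have "W \<in> b \<inter> {X}" using \<open>W \<in> b\<close> by simp
      then show ?thesis using bX by simp
    next
      assume "W = Y" then have "W \<in> b \<inter> {Y}" using \<open>W \<in> b\<close> by simp
      then show ?thesis using bY by simp
    qed
  qed
  then have "b \<subseteq> {Z}" by blast
  moreover have "{Z} \<subseteq> b" using b(2) by simp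
  ultimately have "b = {Z}" by (rule subset_antisym)
  then have Zin: "{Z} \<in> P" using b(1) by simp
  show ?thesis
  proof (rule set_eqI, rule iffI)
    fix b' assume "b' \<in> P"
    have ne: "b' \<noteq> {}" using assms(1) \<open>b' \<in> P\<close> unfolding part_def by simp
    then obtain W where W: "W \<in> b'" by (meson ex_in_conv)
    have "W = X \<or> W = Y \<or> W = Z" by (rule all3)
    then show "b' \<in> {{X}, {Y}, {Z}}"
    proof (elim disjE)
      assume "W = X"
      then have "W \<in> b' \<inter> {X}" using W by simp
      then have "b' = {X}" using dj[OF \<open>b' \<in> P\<close> assms(2)] by blast
      then show ?thesis by simp
    next
      assume "W = Y"
      then have "W \<in> b' \<inter> {Y}" using W by simp
      then have "b' = {Y}" using dj[OF \<open>b' \<in> P\<close> assms(3)] by blast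
      then show ?thesis by simp
    next
      assume "W = Z"
      then have "W \<in> b' \<inter> {Z}" using W by simp
      then have "b' = {Z}" using dj[OF \<open>b' \<in> P\<close> Zin] by blast
      then show ?thesis by simp
    qed
  next
    fix b' assume "b' \<in> {{X}, {Y}, {Z}}"
    then show "b' \<in> P" using assms(2,3) Zin by blast
  qed
qed

context hist begin

lemma edge_three:
  assumes e: "e \<in> Es" and g: "{X, Y} \<in> H e" and nW: "{X, Y} \<notin> parental_trees V Es src tgt \<rho> lab"
    and d: "X \<noteq> Y" "Z \<noteq> X" "Z \<noteq> Y" and all3: "\<And>W. W = X \<or> W = Y \<or> W = Z"
  shows "P e = {{X}, {Y}, {Z}}"
proof -
  have pP: "part (P e)" by (rule part_P[OF e])
  have allS: "\<forall>S\<in>H e. \<exists>s1 s2. s1 \<in> UU (P e) \<and> s2 \<in> UU (P e) \<and> s1 \<inter> s2 = {} \<and> s1 \<noteq> {} \<and> s2 \<noteq> {} \<and> S = s1 \<union> s2"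
    using M24l[OF e pP] by (rule conjunct2)
  obtain s1 s2 where s: "s1 \<in> UU (P e)" "s2 \<in> UU (P e)" "s1 \<inter> s2 = {}" "s1 \<noteq> {}" "s2 \<noteq> {}" "{X, Y} = s1 \<union> s2"
    using bspec[OF allS g] by metis
  have XY: "{X} \<in> P e" "{Y} \<in> P e" using split2[OF pP s d(1)] by auto
  have "Z \<in> \<Union>(P e)"
  proof (rule ccontr)
    assume "Z \<notin> \<Union>(P e)"
    then have "{X, Y} \<in> parental_trees V Es src tgt \<rho> lab"
      by (rule created_in_W[OF e XY(1) XY(2) _ d(1) d(2) d(3) all3])
    then show False using nW by simp
  qed
  then show ?thesis by (rule three[OF pP XY(1) XY(2) _ d all3])
qed

lemma root_three:
  assumes nz: "rootw (bl \<rho>) Qr Hr \<noteq> 0" and g: "{X, Y} \<in> Hr"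
    and d: "X \<noteq> Y" "Z \<noteq> X" "Z \<noteq> Y" and all3: "\<And>W. W = X \<or> W = Y \<or> W = Z"
  shows "bl \<rho> = {{X}, {Y}, {Z}}"
proof -
  have pP: "part (bl \<rho>)" by (rule N1[OF rootV])
  have mp: "mchain (card (bl \<rho>) - 1) (bl \<rho>) Qr Hr \<noteq> 0" using nz unfolding rootw_def .
  have "part (bl \<rho>) \<longrightarrow> part Qr \<and> (\<forall>S\<in>Hr. \<exists>s1 s2. s1 \<in> UU (bl \<rho>) \<and> s2 \<in> UU (bl \<rho>) \<and> s1 \<inter> s2 = {} \<and> s1 \<noteq> {} \<and> s2 \<noteq> {} \<and> S = s1 \<union> s2)"
    using mchain_props[OF mp] by (rule conjunct2[OF conjunct2[OF conjunct2]])
  then have allS: "\<forall>S\<in>Hr. \<exists>s1 s2. s1 \<in> UU (bl \<rho>) \<and> s2 \<in> UU (bl \<rho>) \<and> s1 \<inter> s2 = {} \<and> s1 \<noteq> {} \<and> s2 \<noteq> {} \<and> S = s1 \<union> s2"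
    using pP by blast
  obtain s1 s2 where s: "s1 \<in> UU (bl \<rho>)" "s2 \<in> UU (bl \<rho>)" "s1 \<inter> s2 = {}" "s1 \<noteq> {}" "s2 \<noteq> {}" "{X, Y} = s1 \<union> s2"
    using bspec[OF allS g] by metis
  have XY: "{X} \<in> bl \<rho>" "{Y} \<in> bl \<rho>" using split2[OF pP s d(1)] by auto
  show ?thesis by (rule three[OF pP XY(1) XY(2) tax_root d all3])
qed

lemma blk_unique: "v \<in> V \<Longrightarrow> b1 \<in> bl v \<Longrightarrow> b2 \<in> bl v \<Longrightarrow> W \<in> b1 \<Longrightarrow> W \<in> b2 \<Longrightarrow> b1 = b2"
  using part_unique[OF N1] by blast

lemma created_block:
  assumes "e \<in> Es" "S \<in> H e" "X \<in> S"
  shows "\<exists>B\<in>bl (src e). X \<in> B \<and> S \<subseteq> B"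
proof -
  obtain B where B: "B \<in> Q e" "S \<subseteq> B" using M6l[OF assms(1,2)] by blast
  have "B \<in> bl (src e)" using subsetD[OF Q_sub[OF assms(1)] B(1)] .
  moreover have "X \<in> B" using B(2) assms(3) by blast
  ultimately show ?thesis using B(2) by blast
qed

lemma no_two:
  assumes e: "e1 \<in> Es" "e2 \<in> Es" "e1 \<noteq> e2" and X: "{X} \<in> P e1" "{X} \<in> P e2"
    and t: "{X, Z} \<in> H e1" "{X, Z} \<in> H e2" and d: "Z \<noteq> X"
  shows False
proof -
  have sub: False if a: "a \<in> Es" "b \<in> Es" "{X} \<in> P a" "{X, Z} \<in> H b" "(tgt a, src b) \<in> (SW X)\<^sup>*" for a b
  proof -
    obtain B where B: "B \<in> bl (src b)" "X \<in> B" "{X, Z} \<subseteq> B" using created_block[OF a(2) a(4)] by blast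
    obtain b' where b': "b' \<in> bl (tgt a)" "X \<in> b'" "B \<subseteq> b'" using mono[OF a(5) B(1) B(2)] by blast
    have "{X} \<in> bl (tgt a)" using subsetD[OF P_sub[OF a(1)] a(3)] .
    then have "b' = {X}" using blk_unique[OF tgt_V[OF a(1)] b'(1)] b'(2) by blast
    then show False using B(3) b'(3) d by blast
  qed
  have "e1 = e2 \<or> (tgt e1, src e2) \<in> (SW X)\<^sup>* \<or> (tgt e2, src e1) \<in> (SW X)\<^sup>*"
    using N2[OF e(1) e(2)] X by blast
  then show False using sub[OF e(1) e(2) X(1) t(2)] sub[OF e(2) e(1) X(2) t(1)] e(3) by blast
qed

lemma no_root_edge:
  assumes r: "bl \<rho> = {{X}, {Y}, {Z}}" and e: "e \<in> Es" "{X, Z} \<in> H e" and d: "Z \<noteq> X"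
  shows False
proof -
  obtain B where B: "B \<in> bl (src e)" "X \<in> B" "{X, Z} \<subseteq> B" using created_block[OF e(1) e(2)] by blast
  have "X \<in> \<Union>(bl (src e))" using B by blast
  then have "(\<rho>, src e) \<in> (SW X)\<^sup>*" by (rule up_path[OF src_V[OF e(1)]])
  then obtain b' where b': "b' \<in> bl \<rho>" "X \<in> b'" "B \<subseteq> b'" using mono[OF _ B(1) B(2)] by blast
  have "{X} \<in> bl \<rho>" using r by simp
  then have "b' = {X}" using blk_unique[OF rootV b'(1)] b'(2) by blast
  then show False using B(3) b'(3) d by blast
qed

end

definition sw :: "taxon \<Rightarrow> taxon \<Rightarrow> taxon \<Rightarrow> taxon" where
  "sw Y Z W = (if W = Y then Z else if W = Z then Y else W)"

lemma sw_inv: "sw Y Z (sw Y Z W) = W"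
  unfolding sw_def by auto

lemma bij_sw: "bij (sw Y Z)"
proof (rule o_bij)
  show "sw Y Z \<circ> sw Y Z = id" by (rule ext) (simp add: sw_inv)
  then show "sw Y Z \<circ> sw Y Z = id" .
qed

lemma pm_Union: "pm \<sigma> (\<Union>F) = \<Union>(pm \<sigma> ` F)"
  unfolding pm_def by blast

lemma pm_Int: "bij \<sigma> \<Longrightarrow> pm \<sigma> (U1 \<inter> U2) = pm \<sigma> U1 \<inter> pm \<sigma> U2"
  unfolding pm_def by (metis image_Int inj_img)

context net3 begin

definition Rs :: "'e \<Rightarrow> 'e set" where
  "Rs e = {e' \<in> Es. (tgt e', src e) \<in> Er\<^sup>*}"

definition trip :: "(taxon \<Rightarrow> taxon) \<Rightarrow> taxon set set \<times> taxon set set \<times> taxon set set \<Rightarrow> taxon set set \<times> taxon set set \<times> taxon set set" where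
  "trip \<sigma> x = (pm \<sigma> (fst x), pm \<sigma> (fst (snd x)), pm \<sigma> (snd (snd x)))"

definition phi :: "(taxon \<Rightarrow> taxon) \<Rightarrow> 'e \<Rightarrow> ('e \<Rightarrow> taxon set set \<times> taxon set set \<times> taxon set set) \<Rightarrow> ('e \<Rightarrow> taxon set set \<times> taxon set set \<times> taxon set set)" where
  "phi \<sigma> e h = (\<lambda>e'. if e' \<in> Rs e then trip \<sigma> (h e')
      else if e' = e then (fst (h e), pm \<sigma> (fst (snd (h e))), pm \<sigma> (snd (snd (h e)))) else h e')"

lemma e_notin_Rs: "e \<in> Es \<Longrightarrow> e \<notin> Rs e"
proof
  assume e: "e \<in> Es" "e \<in> Rs e"
  then have "(tgt e, src e) \<in> Er\<^sup>*" unfolding Rs_def by simp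
  then have "(src e, src e) \<in> Er\<^sup>+" using Er_I[OF e(1)] by (rule rtrancl_into_trancl2[rotated])
  then show False using acyc unfolding acyclic_def by simp
qed

lemma Rs_sub: "Rs e \<subseteq> Es" unfolding Rs_def by simp

lemma phi_inj:
  assumes b: "bij \<sigma>" and eq: "phi \<sigma> e h1 = phi \<sigma> e h2"
  shows "h1 = h2"
proof (rule ext)
  fix e'
  have q: "phi \<sigma> e h1 e' = phi \<sigma> e h2 e'" using eq by simp
  show "h1 e' = h2 e'"
  proof (cases "e' \<in> Rs e")
    case True
    then have "trip \<sigma> (h1 e') = trip \<sigma> (h2 e')" using q unfolding phi_def by simp
    then show ?thesis unfolding trip_def using pm_eq_iff[OF b] by (simp add: prod_eq_iff)
  next
    case False
    show ?thesis
    proof (cases "e' = e")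
      case True
      then have "fst (h1 e) = fst (h2 e) \<and> pm \<sigma> (fst (snd (h1 e))) = pm \<sigma> (fst (snd (h2 e)))
          \<and> pm \<sigma> (snd (snd (h1 e))) = pm \<sigma> (snd (snd (h2 e)))" using q False unfolding phi_def by simp
      then show ?thesis using True pm_eq_iff[OF b] by (simp add: prod_eq_iff)
    next
      case F2: False
      then show ?thesis using q False unfolding phi_def by simp
    qed
  qed
qed

lemma phi_PiE: "h \<in> Es \<rightarrow>\<^sub>E UNIV \<Longrightarrow> e \<in> Es \<Longrightarrow> phi \<sigma> e h \<in> Es \<rightarrow>\<^sub>E UNIV"
  unfolding PiE_def extensional_def phi_def using Rs_sub by auto

lemma phi_P: "fst (phi \<sigma> e h e') = (if e' \<in> Rs e then pm \<sigma> (fst (h e')) else fst (h e'))"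
  unfolding phi_def trip_def by simp

lemma phi_H_e: "e \<in> Es \<Longrightarrow> snd (snd (phi \<sigma> e h e)) = pm \<sigma> (snd (snd (h e)))"
  unfolding phi_def using e_notin_Rs by simp

lemma bl_cong: "(\<And>c. c \<in> Es \<Longrightarrow> src c = v \<Longrightarrow> fst (snd (h1 c)) = fst (snd (h2 c))) \<Longrightarrow>
   bottom_lineages Es src lab h1 v = bottom_lineages Es src lab h2 v"
proof -
  assume a: "\<And>c. c \<in> Es \<Longrightarrow> src c = v \<Longrightarrow> fst (snd (h1 c)) = fst (snd (h2 c))"
  have "{fst (snd (h1 c)) | c. c \<in> Es \<and> src c = v} = {fst (snd (h2 c)) | c. c \<in> Es \<and> src c = v}"
  proof (rule Collect_cong)
    fix x show "(\<exists>c. x = fst (snd (h1 c)) \<and> c \<in> Es \<and> src c = v) \<longleftrightarrow> (\<exists>c. x = fst (snd (h2 c)) \<and> c \<in> Es \<and> src c = v)"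
      using a by metis
  qed
  then show ?thesis unfolding bottom_lineages_def by simp
qed

end

locale hphi = hist V Es src tgt \<rho> lab h
  for V :: "'v set" and Es :: "'e set" and src tgt :: "'e \<Rightarrow> 'v" and \<rho> :: 'v and lab :: "'v \<Rightarrow> taxon"
    and h :: "'e \<Rightarrow> taxon set set \<times> taxon set set \<times> taxon set set" +
  fixes \<sigma> :: "taxon \<Rightarrow> taxon" and e0 :: 'e
  assumes bs: "bij \<sigma>" and e0: "e0 \<in> Es" and fixP: "pm \<sigma> (P e0) = P e0"
    and alltax: "\<And>W. W \<in> \<Union>(P e0)"
begin

abbreviation h' where "h' \<equiv> phi \<sigma> e0 h"

lemma side:
  assumes e: "e \<in> Es" "(src e, src e0) \<in> Er\<^sup>*" "e \<notin> Rs e0" "e \<noteq> e0"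
  shows "Q e = {}"
proof (rule ccontr)
  assume "Q e \<noteq> {}"
  then obtain b where b: "b \<in> Q e" by blast
  have "b \<noteq> {}" using part_Q[OF e(1)] b unfolding part_def by simp
  then obtain W where "W \<in> b" by blast
  then have W: "W \<in> \<Union>(Q e)" using b by blast
  then have We: "W \<in> \<Union>(P e)" using UQ[OF e(1)] by simp
  have "e = e0 \<or> (tgt e, src e0) \<in> (SW W)\<^sup>* \<or> (tgt e0, src e) \<in> (SW W)\<^sup>*"
    by (rule N2[OF e(1) e0 We alltax])
  then show False
  proof (elim disjE)
    assume "e = e0" then show False using e(4) by simp
  next
    assume "(tgt e, src e0) \<in> (SW W)\<^sup>*"
    then have "(tgt e, src e0) \<in> Er\<^sup>*" by (rule SW_Er_rtr)
    then have "e \<in> Rs e0" unfolding Rs_def using e(1) by simp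
    then show False using e(3) by simp
  next
    assume "(tgt e0, src e) \<in> (SW W)\<^sup>*"
    then have "(tgt e0, src e) \<in> Er\<^sup>*" by (rule SW_Er_rtr)
    then have "(tgt e0, src e0) \<in> Er\<^sup>*" using e(2) by (rule rtrancl_trans)
    then have "(src e0, src e0) \<in> Er\<^sup>+" using Er_I[OF e0] by (rule rtrancl_into_trancl2[rotated])
    then show False using acyc unfolding acyclic_def by simp
  qed
qed

lemma topmap:
  assumes e: "e \<in> Es" "(src e, src e0) \<in> Er\<^sup>*"
  shows "fst (snd (h' e)) = pm \<sigma> (Q e)"
proof (cases "e \<in> Rs e0")
  case True
  then show ?thesis unfolding phi_def trip_def by simp
next
  case False
  show ?thesis
  proof (cases "e = e0")
    case True
    then show ?thesis unfolding phi_def using False by simp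
  next
    case F2: False
    have "Q e = {}" by (rule side[OF e False F2])
    then show ?thesis unfolding phi_def using False F2 by (simp add: pm_def)
  qed
qed

lemma reach_out: "(v, src e0) \<in> Er\<^sup>* \<Longrightarrow> outdeg Es src v \<noteq> 0"
proof -
  assume r: "(v, src e0) \<in> Er\<^sup>*"
  show ?thesis
  proof (cases "v = src e0")
    case True then show ?thesis using outdeg_pos[OF e0] by simp
  next
    case False
    then have "(v, src e0) \<in> Er\<^sup>+" using r by (simp add: rtrancl_eq_or_trancl)
    then obtain z where "(v, z) \<in> Er" by (meson tranclD)
    then obtain c where "c \<in> Es" "src c = v" unfolding Er_def by blast
    then show ?thesis using outdeg_pos by blast
  qed
qed

lemma bl_phi_in:
  assumes r: "(v, src e0) \<in> Er\<^sup>*"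
  shows "bottom_lineages Es src lab h' v = pm \<sigma> (bl v)"
proof -
  have od: "outdeg Es src v \<noteq> 0" by (rule reach_out[OF r])
  have "{fst (snd (h' c)) | c. c \<in> Es \<and> src c = v} = pm \<sigma> ` {Q c | c. c \<in> Es \<and> src c = v}"
  proof (rule set_eqI)
    fix x
    have "(\<exists>c. x = fst (snd (h' c)) \<and> c \<in> Es \<and> src c = v) \<longleftrightarrow> (\<exists>c. x = pm \<sigma> (Q c) \<and> c \<in> Es \<and> src c = v)"
      using topmap r by metis
    then show "x \<in> {fst (snd (h' c)) | c. c \<in> Es \<and> src c = v} \<longleftrightarrow> x \<in> pm \<sigma> ` {Q c | c. c \<in> Es \<and> src c = v}"
      by blast
  qed
  then have "\<Union>{fst (snd (h' c)) | c. c \<in> Es \<and> src c = v} = pm \<sigma> (\<Union>{Q c | c. c \<in> Es \<and> src c = v})"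
    by (simp add: pm_Union)
  then show ?thesis unfolding bottom_lineages_def using od by simp
qed

lemma bl_phi_out:
  assumes r: "(v, src e0) \<notin> Er\<^sup>*"
  shows "bottom_lineages Es src lab h' v = bl v"
proof (rule bl_cong)
  fix c assume c: "c \<in> Es" "src c = v"
  have "c \<notin> Rs e0"
  proof
    assume "c \<in> Rs e0"
    then have "(tgt c, src e0) \<in> Er\<^sup>*" unfolding Rs_def by simp
    then have "(v, src e0) \<in> Er\<^sup>*" using Er_I[OF c(1)] c(2) by (metis converse_rtrancl_into_rtrancl)
    then show False using r by simp
  qed
  moreover have "c \<noteq> e0" using c(2) r by auto
  ultimately show "fst (snd (h' c)) = Q c" unfolding phi_def by simp
qed

lemma cons_phi: "consistent_history V Es src tgt \<rho> lab h'"
  unfolding consistent_history_def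
proof
  fix v assume v: "v \<in> V - {\<rho>}"
  have cv: "bl v = \<Union>{P e | e. e \<in> Es \<and> tgt e = v} \<and>
   (\<forall>e1\<in>Es. \<forall>e2\<in>Es. tgt e1 = v \<and> tgt e2 = v \<and> e1 \<noteq> e2 \<longrightarrow> P e1 \<inter> P e2 = {})"
    by (rule cons'[OF v])
  show "bottom_lineages Es src lab h' v = \<Union>{fst (h' e) | e. e \<in> Es \<and> tgt e = v} \<and>
        (\<forall>e1\<in>Es. \<forall>e2\<in>Es. tgt e1 = v \<and> tgt e2 = v \<and> e1 \<noteq> e2 \<longrightarrow> fst (h' e1) \<inter> fst (h' e2) = {})"
  proof (cases "(v, src e0) \<in> Er\<^sup>*")
    case True
    have inR: "e \<in> Rs e0" if "e \<in> Es" "tgt e = v" for e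
      unfolding Rs_def using that True by simp
    have Pm: "fst (h' e) = pm \<sigma> (P e)" if "e \<in> Es" "tgt e = v" for e
      using inR[OF that] unfolding phi_P by simp
    have "{fst (h' e) | e. e \<in> Es \<and> tgt e = v} = pm \<sigma> ` {P e | e. e \<in> Es \<and> tgt e = v}"
    proof (rule set_eqI)
      fix x
      have "(\<exists>e. x = fst (h' e) \<and> e \<in> Es \<and> tgt e = v) \<longleftrightarrow> (\<exists>e. x = pm \<sigma> (P e) \<and> e \<in> Es \<and> tgt e = v)"
        using Pm by metis
      then show "x \<in> {fst (h' e) | e. e \<in> Es \<and> tgt e = v} \<longleftrightarrow> x \<in> pm \<sigma> ` {P e | e. e \<in> Es \<and> tgt e = v}"
        by blast
    qed
    then have U: "\<Union>{fst (h' e) | e. e \<in> Es \<and> tgt e = v} = pm \<sigma> (bl v)"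
      using cv by (simp add: pm_Union)
    have D: "\<forall>e1\<in>Es. \<forall>e2\<in>Es. tgt e1 = v \<and> tgt e2 = v \<and> e1 \<noteq> e2 \<longrightarrow> fst (h' e1) \<inter> fst (h' e2) = {}"
    proof (intro ballI impI)
      fix e1 e2 assume a: "e1 \<in> Es" "e2 \<in> Es" "tgt e1 = v \<and> tgt e2 = v \<and> e1 \<noteq> e2"
      have "P e1 \<inter> P e2 = {}" using cv a by blast
      then have "pm \<sigma> (P e1) \<inter> pm \<sigma> (P e2) = {}" using pm_Int[OF bs] by (metis pm_empty_iff)
      then show "fst (h' e1) \<inter> fst (h' e2) = {}" using Pm a by simp
    qed
    show ?thesis using bl_phi_in[OF True] U D by simp
  next
    case False
    have nR: "e \<notin> Rs e0" if "e \<in> Es" "tgt e = v" for e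
      unfolding Rs_def using that False by simp
    have Pm: "fst (h' e) = P e" if "e \<in> Es" "tgt e = v" for e
      using nR[OF that] unfolding phi_P by simp
    have "{fst (h' e) | e. e \<in> Es \<and> tgt e = v} = {P e | e. e \<in> Es \<and> tgt e = v}"
    proof (rule Collect_cong)
      fix x
      show "(\<exists>e. x = fst (h' e) \<and> e \<in> Es \<and> tgt e = v) \<longleftrightarrow> (\<exists>e. x = P e \<and> e \<in> Es \<and> tgt e = v)"
        using Pm by metis
    qed
    moreover have "\<forall>e1\<in>Es. \<forall>e2\<in>Es. tgt e1 = v \<and> tgt e2 = v \<and> e1 \<noteq> e2 \<longrightarrow> fst (h' e1) \<inter> fst (h' e2) = {}"
      using cv Pm by simp
    ultimately show ?thesis using bl_phi_out[OF False] cv by simp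
  qed
qed

lemma root_U: "\<Union>{fst (snd (h2 e)) | e. e \<in> Es \<and> src e = \<rho>} = bottom_lineages Es src lab h2 \<rho>"
  unfolding bottom_lineages_def using outdeg_root by simp

lemma hw_phi: "history_weight V Es src tgt \<rho> len \<gamma> h' (pm \<sigma> Qr) (pm \<sigma> Hr) = history_weight V Es src tgt \<rho> len \<gamma> h Qr Hr"
proof -
  have f1: "coalw (len e) (fst (h' e)) (fst (snd (h' e))) (snd (snd (h' e))) = coalw (len e) (P e) (Q e) (H e)"
    if "e \<in> Es" for e
  proof (cases "e \<in> Rs e0")
    case True
    then show ?thesis unfolding phi_def trip_def using coalw_perm[OF bs] by simp
  next
    case False
    show ?thesis
    proof (cases "e = e0")
      case True
      have "coalw (len e) (fst (h' e)) (fst (snd (h' e))) (snd (snd (h' e))) = coalw (len e0) (pm \<sigma> (P e0)) (pm \<sigma> (Q e0)) (pm \<sigma> (H e0))"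
        unfolding phi_def using False True fixP by simp
      also have "\<dots> = coalw (len e0) (P e0) (Q e0) (H e0)" by (rule coalw_perm[OF bs])
      finally show ?thesis using True by simp
    next
      case F2: False
      then show ?thesis unfolding phi_def using False by simp
    qed
  qed
  have f2: "card (fst (h' e)) = card (P e)" for e
    unfolding phi_P using card_pm[OF bs] by simp
  have f3: "\<Union>{fst (snd (h' e)) | e. e \<in> Es \<and> src e = \<rho>} = pm \<sigma> (\<Union>{Q e | e. e \<in> Es \<and> src e = \<rho>})"
    unfolding root_U using bl_phi_in[OF reach_root[OF src_V[OF e0]]] by simp
  show ?thesis unfolding history_weight_def f3 rootw_perm[OF bs] f2
    using f1 by (simp cong: prod.cong)
qed

lemma H_phi: "snd (snd (h' e0)) = pm \<sigma> (H e0)"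
  by (rule phi_H_e[OF e0])

end

lemma two_subsets: "card (T::taxon set) = 2 \<Longrightarrow> T = {A, B} \<or> T = {A, C} \<or> T = {B, C}"
proof -
  assume "card T = 2"
  then obtain x y where xy: "T = {x, y}" "x \<noteq> y" by (meson card_2_iff)
  show ?thesis using xy by (cases x; cases y) (auto simp: insert_commute)
qed

lemma pick:
  fixes g t :: "taxon set"
  assumes "card g = 2" "card t = 2" "g \<noteq> t"
  shows "\<exists>X Y Z. g = {X, Y} \<and> t = {X, Z} \<and> X \<noteq> Y \<and> Z \<noteq> X \<and> Z \<noteq> Y \<and> (\<forall>W. W = X \<or> W = Y \<or> W = Z)"
proof -
  have all: "\<forall>W. W = A \<or> W = B \<or> W = C" using taxon.exhaust by blast
  have all': "\<forall>W. W = A \<or> W = C \<or> W = B" "\<forall>W. W = B \<or> W = A \<or> W = C" "\<forall>W. W = B \<or> W = C \<or> W = A"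
     "\<forall>W. W = C \<or> W = A \<or> W = B" "\<forall>W. W = C \<or> W = B \<or> W = A" using all by blast+
  from two_subsets[OF assms(1)] two_subsets[OF assms(2)] assms(3) show ?thesis
  proof (elim disjE)
  qed (use all all' in \<open>simp_all add: insert_commute; blast\<close>)+
qed

context net3 begin

definition FF :: "('e \<Rightarrow> real) \<Rightarrow> ('e \<Rightarrow> real) \<Rightarrow> taxon set \<Rightarrow>
   ('e \<Rightarrow> taxon set set \<times> taxon set set \<times> taxon set set) \<times> (taxon set set \<times> taxon set set) \<Rightarrow> real" where
  "FF len \<gamma> g x = (case x of (h, y) \<Rightarrow> (case y of (Qr, Hr) \<Rightarrow>
      if consistent_history V Es src tgt \<rho> lab h \<and> g \<in> Hr \<union> \<Union>((\<lambda>e. snd (snd (h e))) ` Es)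
      then history_weight V Es src tgt \<rho> len \<gamma> h Qr Hr else 0))"

definition DD where "DD = (Es \<rightarrow>\<^sub>E (UNIV :: (taxon set set \<times> taxon set set \<times> taxon set set) set)) \<times> (UNIV :: (taxon set set \<times> taxon set set) set)"

lemma gtp: "gene_tree_prob V Es src tgt \<rho> lab len \<gamma> g = (\<Sum>x\<in>DD. FF len \<gamma> g x)"
  unfolding gene_tree_prob_def FF_def DD_def by (simp add: sum.cartesian_product case_prod_beta')

lemma finDD: "finite DD"
  unfolding DD_def using finEs by (simp add: finite_PiE)

lemma hw_nonneg:
  assumes "valid_params V Es tgt len \<gamma>"
  shows "history_weight V Es src tgt \<rho> len \<gamma> h Qr Hr \<ge> 0"
proof -
  have g: "\<gamma> e \<ge> 0" if "v \<in> reticulations V Es tgt" "e \<in> {e \<in> Es. tgt e = v}" for v e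
    using assms that unfolding valid_params_def by auto
  show ?thesis unfolding history_weight_def
    by (intro mult_nonneg_nonneg prod_nonneg coalw_nonneg rootw_nonneg ballI zero_le_power g) 
qed

lemma FF_nonneg: "valid_params V Es tgt len \<gamma> \<Longrightarrow> FF len \<gamma> g x \<ge> 0"
  unfolding FF_def using hw_nonneg by (auto split: prod.splits)

lemma good_hist:
  assumes "consistent_history V Es src tgt \<rho> lab h" "history_weight V Es src tgt \<rho> len \<gamma> h Qr Hr \<noteq> 0"
  shows "hist V Es src tgt \<rho> lab h \<and> rootw (bottom_lineages Es src lab h \<rho>) Qr Hr \<noteq> 0"
proof -
  have nz: "(\<Prod>e\<in>Es. coalw (len e) (fst (h e)) (fst (snd (h e))) (snd (snd (h e)))) \<noteq> 0"
    "rootw (\<Union>{fst (snd (h e)) | e. e \<in> Es \<and> src e = \<rho>}) Qr Hr \<noteq> 0"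
    using assms(2) unfolding history_weight_def by auto
  have "\<forall>e\<in>Es. \<exists>k. mchain k (fst (h e)) (fst (snd (h e))) (snd (snd (h e))) \<noteq> 0"
  proof
    fix e assume e: "e \<in> Es"
    have "coalw (len e) (fst (h e)) (fst (snd (h e))) (snd (snd (h e))) \<noteq> 0"
      using nz(1) e finEs by (auto simp: prod_zero_iff)
    then obtain k where "pd (card (fst (h e))) k (len e) * mchain k (fst (h e)) (fst (snd (h e))) (snd (snd (h e))) \<noteq> 0"
      unfolding coalw_def by (auto elim: sum.not_neutral_contains_not_neutral)
    then show "\<exists>k. mchain k (fst (h e)) (fst (snd (h e))) (snd (snd (h e))) \<noteq> 0" by auto
  qed
  then have "hist V Es src tgt \<rho> lab h" using assms(1) net by (simp add: hist_def hist_axioms_def net3_def)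
  moreover have "rootw (bottom_lineages Es src lab h \<rho>) Qr Hr \<noteq> 0"
    using nz(2) unfolding bottom_lineages_def using outdeg_root by simp
  ultimately show ?thesis by simp
qed

end

context net3 begin

lemma ineq:
  assumes vp: "valid_params V Es tgt len \<gamma>"
    and d: "X \<noteq> Y" "Z \<noteq> X" "Z \<noteq> Y" and all3: "\<And>W. W = X \<or> W = Y \<or> W = Z"
    and nW: "{X, Y} \<notin> parental_trees V Es src tgt \<rho> lab"
  shows "gene_tree_prob V Es src tgt \<rho> lab len \<gamma> {X, Y} \<le> gene_tree_prob V Es src tgt \<rho> lab len \<gamma> {X, Z}"
proof -
  define g where "g = {X, Y}"
  define t where "t = {X, Z}"
  define \<sigma> where "\<sigma> = sw Y Z"
  have bs: "bij \<sigma>" unfolding \<sigma>_def by (rule bij_sw)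
  have sg: "\<sigma> ` g = t" unfolding \<sigma>_def g_def t_def sw_def using d by auto
  have fix3: "pm \<sigma> {{X}, {Y}, {Z}} = {{X}, {Y}, {Z}}" unfolding pm_def \<sigma>_def sw_def using d by auto
  have all3': "\<And>W. W \<in> \<Union>{{X}, {Y}, {Z}}" using all3 by blast
  define pick where "pick h = (SOME e. e \<in> Es \<and> g \<in> snd (snd (h e)))" for h :: "'e \<Rightarrow> taxon set set \<times> taxon set set \<times> taxon set set"
  define Psi where "Psi x = (case x of (h, y) \<Rightarrow> (case y of (Qr, Hr) \<Rightarrow>
      if g \<in> Hr then (h, (pm \<sigma> Qr, pm \<sigma> Hr)) else (phi \<sigma> (pick h) h, (pm \<sigma> Qr, pm \<sigma> Hr))))" for x
  define S where "S = {x \<in> DD. FF len \<gamma> g x \<noteq> 0}"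
  have Sx: "consistent_history V Es src tgt \<rho> lab h \<and> g \<in> Hr \<union> \<Union>((\<lambda>e. snd (snd (h e))) ` Es)
       \<and> history_weight V Es src tgt \<rho> len \<gamma> h Qr Hr \<noteq> 0 \<and> h \<in> Es \<rightarrow>\<^sub>E UNIV
       \<and> FF len \<gamma> g (h, (Qr, Hr)) = history_weight V Es src tgt \<rho> len \<gamma> h Qr Hr"
    if "(h, (Qr, Hr)) \<in> S" for h Qr Hr
  proof -
    have "FF len \<gamma> g (h, (Qr, Hr)) \<noteq> 0" "h \<in> Es \<rightarrow>\<^sub>E UNIV" using that unfolding S_def DD_def by auto
    then show ?thesis unfolding FF_def by (auto split: if_splits)
  qed
  have edge: "pick h \<in> Es \<and> g \<in> snd (snd (h (pick h))) \<and> hphi V Es src tgt \<rho> lab h \<sigma> (pick h)"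
    if "(h, (Qr, Hr)) \<in> S" "g \<notin> Hr" for h Qr Hr
  proof -
    note s = Sx[OF that(1)]
    have hh: "hist V Es src tgt \<rho> lab h" using good_hist s by blast
    interpret hist V Es src tgt \<rho> lab h by (rule hh)
    have "\<exists>e. e \<in> Es \<and> g \<in> snd (snd (h e))" using s that(2) by blast
    then have pk: "pick h \<in> Es \<and> g \<in> snd (snd (h (pick h)))" unfolding pick_def by (rule someI_ex)
    have P3: "P (pick h) = {{X}, {Y}, {Z}}"
      using edge_three[OF conjunct1[OF pk] _ nW d all3] pk unfolding g_def by blast
    have "hphi V Es src tgt \<rho> lab h \<sigma> (pick h)"
      by (unfold_locales) (use bs pk P3 fix3 all3' in auto)
    then show ?thesis using pk by blast
  qed
  have root: "bottom_lineages Es src lab h \<rho> = {{X}, {Y}, {Z}}"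
    if "(h, (Qr, Hr)) \<in> S" "g \<in> Hr" for h Qr Hr
  proof -
    note s = Sx[OF that(1)]
    have hh: "hist V Es src tgt \<rho> lab h" and rz: "rootw (bottom_lineages Es src lab h \<rho>) Qr Hr \<noteq> 0"
      using good_hist s by blast+
    interpret hist V Es src tgt \<rho> lab h by (rule hh)
    show ?thesis using root_three[OF rz _ d all3] that(2) unfolding g_def by blast
  qed
  have PsiF: "Psi x \<in> DD \<and> FF len \<gamma> t (Psi x) = FF len \<gamma> g x" if "x \<in> S" for x
  proof -
    obtain h Qr Hr where x: "x = (h, (Qr, Hr))" by (metis prod.exhaust)
    note s = Sx[OF that[unfolded x]]
    show ?thesis
    proof (cases "g \<in> Hr")
      case True
      have r: "bottom_lineages Es src lab h \<rho> = {{X}, {Y}, {Z}}" using root that True x by blast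
      have U: "\<Union>{fst (snd (h e)) | e. e \<in> Es \<and> src e = \<rho>} = {{X}, {Y}, {Z}}"
        using r unfolding bottom_lineages_def using outdeg_root by simp
      have "history_weight V Es src tgt \<rho> len \<gamma> h (pm \<sigma> Qr) (pm \<sigma> Hr) = history_weight V Es src tgt \<rho> len \<gamma> h Qr Hr"
      proof -
        have "rootw {{X}, {Y}, {Z}} (pm \<sigma> Qr) (pm \<sigma> Hr) = rootw {{X}, {Y}, {Z}} Qr Hr"
          using rootw_perm[OF bs, of "{{X}, {Y}, {Z}}" Qr Hr] fix3 by simp
        then show ?thesis unfolding history_weight_def U by simp
      qed
      moreover have "t \<in> pm \<sigma> Hr" using True sg mem_pm_iff[OF bs] by metis
      ultimately show ?thesis using s True unfolding x Psi_def FF_def DD_def by auto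
    next
      case False
      have ed: "pick h \<in> Es" "g \<in> snd (snd (h (pick h)))" "hphi V Es src tgt \<rho> lab h \<sigma> (pick h)"
        using edge that False x by blast+
      interpret hphi V Es src tgt \<rho> lab h \<sigma> "pick h" by (rule ed(3))
      have tin: "t \<in> snd (snd (h' (pick h)))" using H_phi ed(2) sg mem_pm_iff[OF bs] by metis
      have "Psi x = (h', (pm \<sigma> Qr, pm \<sigma> Hr))" unfolding x Psi_def using False by simp
      moreover have "h' \<in> Es \<rightarrow>\<^sub>E UNIV" using phi_PiE s ed(1) by blast
      moreover have "FF len \<gamma> t (h', (pm \<sigma> Qr, pm \<sigma> Hr)) = history_weight V Es src tgt \<rho> len \<gamma> h Qr Hr"
        unfolding FF_def using cons_phi hw_phi tin ed(1) by auto
      ultimately show ?thesis using s unfolding x DD_def by simp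
    qed
  qed
  have inj: "inj_on Psi S"
  proof (rule inj_onI)
    fix x1 x2 assume x12: "x1 \<in> S" "x2 \<in> S" "Psi x1 = Psi x2"
    obtain h1 Q1 H1 where x1: "x1 = (h1, (Q1, H1))" by (metis prod.exhaust)
    obtain h2 Q2 H2 where x2: "x2 = (h2, (Q2, H2))" by (metis prod.exhaust)
    have s1: "(h1, (Q1, H1)) \<in> S" and s2: "(h2, (Q2, H2)) \<in> S" using x12 x1 x2 by auto
    have QH: "pm \<sigma> Q1 = pm \<sigma> Q2" "pm \<sigma> H1 = pm \<sigma> H2"
      using x12(3) unfolding x1 x2 Psi_def by (auto split: if_splits)
    then have QH': "Q1 = Q2" "H1 = H2" using pm_eq_iff[OF bs] by auto
    show "x1 = x2"
    proof (cases "g \<in> H1")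
      case True
      then have "h1 = h2" using x12(3) QH' unfolding x1 x2 Psi_def by simp
      then show ?thesis using x1 x2 QH' by simp
    next
      case False
      then have F2: "g \<notin> H2" using QH' by simp
      have eq: "phi \<sigma> (pick h1) h1 = phi \<sigma> (pick h2) h2"
        using x12(3) False F2 unfolding x1 x2 Psi_def by simp
      have ed1: "pick h1 \<in> Es" "g \<in> snd (snd (h1 (pick h1)))" "hphi V Es src tgt \<rho> lab h1 \<sigma> (pick h1)"
        using edge s1 False by blast+
      have ed2: "pick h2 \<in> Es" "g \<in> snd (snd (h2 (pick h2)))" "hphi V Es src tgt \<rho> lab h2 \<sigma> (pick h2)"
        using edge s2 F2 by blast+
      show ?thesis
      proof (cases "pick h1 = pick h2")
        case True
        then have "h1 = h2" using phi_inj[OF bs] eq by metis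
        then show ?thesis using x1 x2 QH' by simp
      next
        case ne: False
        define y where "y = phi \<sigma> (pick h1) h1"
        have P1: "fst (y (pick h1)) = {{X}, {Y}, {Z}}" and T1: "t \<in> snd (snd (y (pick h1)))"
          and cy: "consistent_history V Es src tgt \<rho> lab y"
          and wy: "history_weight V Es src tgt \<rho> len \<gamma> y (pm \<sigma> Q1) (pm \<sigma> H1) \<noteq> 0"
        proof -
          interpret hphi V Es src tgt \<rho> lab h1 \<sigma> "pick h1" by (rule ed1(3))
          have "P (pick h1) = {{X}, {Y}, {Z}}"
            using edge_three[OF ed1(1) _ nW d all3] ed1(2) unfolding g_def by blast
          then show "fst (y (pick h1)) = {{X}, {Y}, {Z}}" unfolding y_def phi_P using e_notin_Rs[OF ed1(1)] by simp
          show "t \<in> snd (snd (y (pick h1)))" unfolding y_def using H_phi ed1(2) sg mem_pm_iff[OF bs] by metis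
          show "consistent_history V Es src tgt \<rho> lab y" unfolding y_def by (rule cons_phi)
          show "history_weight V Es src tgt \<rho> len \<gamma> y (pm \<sigma> Q1) (pm \<sigma> H1) \<noteq> 0"
            unfolding y_def hw_phi using Sx[OF s1] by blast
        qed
        have P2: "fst (y (pick h2)) = {{X}, {Y}, {Z}}" and T2: "t \<in> snd (snd (y (pick h2)))"
        proof -
          interpret hphi V Es src tgt \<rho> lab h2 \<sigma> "pick h2" by (rule ed2(3))
          have "P (pick h2) = {{X}, {Y}, {Z}}"
            using edge_three[OF ed2(1) _ nW d all3] ed2(2) unfolding g_def by blast
          then show "fst (y (pick h2)) = {{X}, {Y}, {Z}}" unfolding y_def eq phi_P using e_notin_Rs[OF ed2(1)] by simp
          show "t \<in> snd (snd (y (pick h2)))" unfolding y_def eq using H_phi ed2(2) sg mem_pm_iff[OF bs] by metis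
        qed
        have "hist V Es src tgt \<rho> lab y" using good_hist[OF cy wy] by blast
        then interpret hy: hist V Es src tgt \<rho> lab y .
        show ?thesis
          using hy.no_two[OF ed1(1) ed2(1) ne _ _ _ _ d(2)] P1 P2 T1 T2 unfolding t_def by simp
      qed
    qed
  qed
  have "gene_tree_prob V Es src tgt \<rho> lab len \<gamma> g = (\<Sum>x\<in>DD. FF len \<gamma> g x)" by (rule gtp)
  also have "\<dots> = (\<Sum>x\<in>S. FF len \<gamma> g x)"
    by (rule sum.mono_neutral_right) (use finDD in \<open>auto simp: S_def\<close>)
  also have "\<dots> = (\<Sum>x\<in>S. FF len \<gamma> t (Psi x))" using PsiF by simp
  also have "\<dots> = (\<Sum>y\<in>Psi ` S. FF len \<gamma> t y)" by (simp add: sum.reindex[OF inj])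
  also have "\<dots> \<le> (\<Sum>y\<in>DD. FF len \<gamma> t y)"
    by (rule sum_mono2[OF finDD]) (use PsiF FF_nonneg[OF vp] in auto)
  also have "\<dots> = gene_tree_prob V Es src tgt \<rho> lab len \<gamma> t" by (rule gtp[symmetric])
  finally show ?thesis unfolding g_def t_def .
qed

end

theorem lemma1:
  fixes V :: "'v set" and Es :: "'e set" and src tgt :: "'e \<Rightarrow> 'v" and \<rho> :: 'v
    and lab :: "'v \<Rightarrow> taxon"
  assumes "phylo_net3 V Es src tgt \<rho> lab"
  shows "\<forall>len \<gamma>. valid_params V Es tgt len \<gamma> \<longrightarrow>
           (\<nexists>g. g \<in> topologies3 \<and> anomalous V Es src tgt \<rho> lab len \<gamma> g)"
proof (intro allI impI notI)
  fix len \<gamma>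
  assume vp: "valid_params V Es tgt len \<gamma>"
  assume "\<exists>g. g \<in> topologies3 \<and> anomalous V Es src tgt \<rho> lab len \<gamma> g"
  then obtain g where g: "g \<in> topologies3" "anomalous V Es src tgt \<rho> lab len \<gamma> g" by blast
  interpret net3 V Es src tgt \<rho> lab by (unfold_locales) (rule assms)
  obtain t0 where t0: "t0 \<in> parental_trees V Es src tgt \<rho> lab" using parental_nonempty by blast
  have lt: "gene_tree_prob V Es src tgt \<rho> lab len \<gamma> g > gene_tree_prob V Es src tgt \<rho> lab len \<gamma> t0"
    using g(2) t0 unfolding anomalous_def by blast
  show False
  proof (cases "g \<in> parental_trees V Es src tgt \<rho> lab")
    case True
    then have "gene_tree_prob V Es src tgt \<rho> lab len \<gamma> g > gene_tree_prob V Es src tgt \<rho> lab len \<gamma> g"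
      using g(2) unfolding anomalous_def by blast
    then show False by simp
  next
    case False
    have c1: "card g = 2" using g(1) unfolding topologies3_def by simp
    have c2: "card t0 = 2" using t0 unfolding parental_trees_def by simp
    have ne: "g \<noteq> t0" using False t0 by blast
    obtain X Y Z where xyz: "g = {X, Y}" "t0 = {X, Z}" "X \<noteq> Y" "Z \<noteq> X" "Z \<noteq> Y" "\<forall>W. W = X \<or> W = Y \<or> W = Z"
      using pick[OF c1 c2 ne] by blast
    have "gene_tree_prob V Es src tgt \<rho> lab len \<gamma> {X, Y} \<le> gene_tree_prob V Es src tgt \<rho> lab len \<gamma> {X, Z}"
      by (rule ineq[OF vp xyz(3) xyz(4) xyz(5)]) (use xyz(6) False xyz(1) in auto)
    then show False using lt xyz(1,2) by simp
  qed
qed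

end
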